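(* Let $\mathcal C$ be a category, $n\ge1$, and let $f:A\to B$ be a degeneracy map in $Z^n(\mathcal C)$. Then $f$ factors, uniquely up to isomorphism, as a simple degeneracy map followed by a parallel degeneracy map.
   Context: Notation: for $n\ge 0$, $[n]$ denotes $\{0,\dots,n-1\}$; $\Delta_+$ is the category of these finite total orders and order-preserving maps. For monotone $\varphi:[n]\to[m]$ define $\hat\varphi:[m+1]\to[n+1]$ by $\hat\varphi(i)=\min(\{j\in[n]:\varphi(j)\ge i\}\cup\{n\})$. Zigzags: in a category $\mathcal C$, a zigzag $X$ of length $n$ is a diagram $X(r_0)\xrightarrow{x_0} X(s_0)\xleftarrow{x'_0} X(r_1)\to\cdots\xrightarrow{x_{n-1}} X(s_{n-1})\xleftarrow{x'_{n-1}} X(r_n)$. A zigzag map $f:X\to Y$ (lengths $n$, $m$) consists of a monotone $f_s:[n]\to[m]$, regular slices $f(r_i):X(r_{\hat{f_s}(i)})\to Y(r_i)$ for $0\le i\le m$ and singular slices $f(s_j):X(s_j)\to Y(s_{f_s(j)})$ for $0\le j<n$, such that for each $0\le i<m$: if $f_s^{-1}(i)\neq\emptyset$ with least element $p$, greatest $q$, then $f(s_p)\circ x_p=y_i\circ f(r_i)$, $f(s_q)\circ x'_q=y'_i\circ f(r_{i+1})$, $f(s_j)\circ x'_j=f(s_{j+1})\circ x_{j+1}$ for $p\le j<q$; if $f_s^{-1}(i)=\emptyset$ then $y_i\circ f(r_i)=y'_i\circ f(r_{i+1})$. Composition: $(g\circ f)_s=g_s\circ f_s$, $(g\circ f)(s_j)=g(s_{f_s(j)})\circ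 f(s_j)$, $(g\circ f)(r_i)=g(r_i)\circ f(r_{\hat{g_s}(i)})$. This gives a category $Z(\mathcal C)$; $Z^0(\mathcal C)=\mathcal C$, $Z^n(\mathcal C)=Z(Z^{n-1}(\mathcal C))$. $\pi:Z(\mathcal C)\to\Delta_+$ sends a zigzag of length $n$ to $[n]$ and $f$ to $f_s$; $f$ is $\pi$-vertical if $\pi(f)$ is an identity; $f:x\to y$ is $\pi$-cocartesian if for every $h:x\to y'$ and $u:\pi(y)\to\pi(y')$ with $u\circ\pi(f)=\pi(h)$ there is a unique $v:y\to y'$ with $v\circ f=h$, $\pi(v)=u$. Degeneracy maps in $Z^n(\mathcal C)$ (by induction on $n$): in $Z^0(\mathcal C)$ the isomorphisms; for $n\ge1$ the maps generated under composition by simple degeneracy maps (the $\pi$-cocartesian maps $f$ with $\pi(f)$ a monomorphism of $\Delta_+$) and parallel degeneracy maps (the $\pi$-vertical maps whose regular and singular slices are all degeneracy maps in $Z^{n-1}(\mathcal C)$). *)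

theory Defs
  imports Main
begin

record ('o, 'a) cat =
  Ob  :: "'o set"
  Ar  :: "'a set"
  Dom :: "'a \<Rightarrow> 'o"
  Cod :: "'a \<Rightarrow> 'o"
  Cmp :: "'a \<Rightarrow> 'a \<Rightarrow> 'a"   (* Cmp C g f = g o f *)
  Idt :: "'o \<Rightarrow> 'a"

definition is_category :: "('o, 'a) cat \<Rightarrow> bool" where
  "is_category C \<longleftrightarrow>
     (\<forall>f\<in>Ar C. Dom C f \<in> Ob C \<and> Cod C f \<in> Ob C) \<and>
     (\<forall>a\<in>Ob C. Idt C a \<in> Ar C \<and> Dom C (Idt C a) = a \<and> Cod C (Idt C a) = a) \<and>
     (\<forall>f\<in>Ar C. \<forall>g\<in>Ar C. Cod C f = Dom C g \<longrightarrow>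
        Cmp C g f \<in> Ar C \<and> Dom C (Cmp C g f) = Dom C f \<and> Cod C (Cmp C g f) = Cod C g) \<and>
     (\<forall>f\<in>Ar C. Cmp C (Idt C (Cod C f)) f = f \<and> Cmp C f (Idt C (Dom C f)) = f) \<and>
     (\<forall>f\<in>Ar C. \<forall>g\<in>Ar C. \<forall>h\<in>Ar C. Cod C f = Dom C g \<longrightarrow> Cod C g = Dom C h \<longrightarrow>
        Cmp C h (Cmp C g f) = Cmp C (Cmp C h g) f)"

definition is_iso :: "('o, 'a) cat \<Rightarrow> 'a \<Rightarrow> bool" where
  "is_iso C f \<longleftrightarrow> f \<in> Ar C \<and>
     (\<exists>g\<in>Ar C. Dom C g = Cod C f \<and> Cod C g = Dom C f \<and>
        Cmp C g f = Idt C (Dom C f) \<and> Cmp C f g = Idt C (Cod C f))"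

section \<open>A universal type for objects and arrows of all iterated zigzag categories\<close>

text \<open>A zigzag object  OZig rs ss xs xs'  of length n has regular objects rs (length n+1),
  singular objects ss (length n), forward maps xs (x_i : r_i -> s_i) and backward maps
  xs' (x'_i : r_(i+1) -> s_i).  A zigzag map  AZig X Y fs rsl ssl  has source X, target Y,
  singular map f_s given as the list fs = [f_s(0),...,f_s(n-1)], regular slices rsl
  (length m+1) and singular slices ssl (length n).\<close>

datatype ('o, 'm) zob =
    OBase (obase: 'o)
  | OZig (zregs: "('o, 'm) zob list") (zsings: "('o, 'm) zob list")
         (zfwd: "('o, 'm) zar list") (zbwd: "('o, 'm) zar list")
and ('o, 'm) zar =
    ABase (abase: 'm)
  | AZig (zsrc: "('o, 'm) zob") (ztgt: "('o, 'm) zob") (zfs: "nat list")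
         (zrsl: "('o, 'm) zar list") (zssl: "('o, 'm) zar list")

type_synonym ('o, 'm) zcat = "(('o, 'm) zob, ('o, 'm) zar) cat"

definition zlen :: "('o, 'm) zob \<Rightarrow> nat" where
  "zlen X = length (zsings X)"

text \<open>Monotone maps [n] -> [m] of Delta_+, represented as lists.\<close>
definition mono_map :: "nat \<Rightarrow> nat \<Rightarrow> nat list \<Rightarrow> bool" where
  "mono_map n m fs \<longleftrightarrow> length fs = n \<and> (\<forall>j<n. fs ! j < m) \<and>
     (\<forall>i j. i \<le> j \<longrightarrow> j < n \<longrightarrow> fs ! i \<le> fs ! j)"

definition hat :: "nat list \<Rightarrow> nat \<Rightarrow> nat" where
  "hat fs i = Min ({j. j < length fs \<and> i \<le> fs ! j} \<union> {length fs})"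

definition lift0 :: "('o, 'm) cat \<Rightarrow> ('o, 'm) zcat" where
  "lift0 C = \<lparr> Ob = OBase ` Ob C, Ar = ABase ` Ar C,
     Dom = (\<lambda>a. OBase (Dom C (abase a))), Cod = (\<lambda>a. OBase (Cod C (abase a))),
     Cmp = (\<lambda>g f. ABase (Cmp C (abase g) (abase f))),
     Idt = (\<lambda>x. ABase (Idt C (obase x))) \<rparr>"

definition is_zig :: "('o, 'm) zcat \<Rightarrow> ('o, 'm) zob \<Rightarrow> bool" where
  "is_zig D X \<longleftrightarrow> (\<exists>rs ss xs xs'. X = OZig rs ss xs xs' \<and>
     length rs = Suc (length ss) \<and> length xs = length ss \<and> length xs' = length ss \<and>
     set rs \<subseteq> Ob D \<and> set ss \<subseteq> Ob D \<and>
     (\<forall>i<length ss. xs ! i \<in> Ar D \<and> Dom D (xs ! i) = rs ! i \<and> Cod D (xs ! i) = ss ! i \<and>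
        xs' ! i \<in> Ar D \<and> Dom D (xs' ! i) = rs ! Suc i \<and> Cod D (xs' ! i) = ss ! i))"

definition is_zmap :: "('o, 'm) zcat \<Rightarrow> ('o, 'm) zar \<Rightarrow> bool" where
  "is_zmap D F \<longleftrightarrow> (\<exists>X Y fs rsl ssl. F = AZig X Y fs rsl ssl \<and>
     is_zig D X \<and> is_zig D Y \<and>
     mono_map (zlen X) (zlen Y) fs \<and>
     length rsl = Suc (zlen Y) \<and> length ssl = zlen X \<and>
     (\<forall>i\<le>zlen Y. rsl ! i \<in> Ar D \<and> Dom D (rsl ! i) = zregs X ! hat fs i \<and>
        Cod D (rsl ! i) = zregs Y ! i) \<and>
     (\<forall>j<zlen X. ssl ! j \<in> Ar D \<and> Dom D (ssl ! j) = zsings X ! j \<and>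
        Cod D (ssl ! j) = zsings Y ! (fs ! j)) \<and>
     (\<forall>i<zlen Y.
        (if {j. j < zlen X \<and> fs ! j = i} \<noteq> {} then
           (let p = Min {j. j < zlen X \<and> fs ! j = i}; q = Max {j. j < zlen X \<and> fs ! j = i} in
             Cmp D (ssl ! p) (zfwd X ! p) = Cmp D (zfwd Y ! i) (rsl ! i) \<and>
             Cmp D (ssl ! q) (zbwd X ! q) = Cmp D (zbwd Y ! i) (rsl ! Suc i) \<and>
             (\<forall>j. p \<le> j \<longrightarrow> j < q \<longrightarrow>
                Cmp D (ssl ! j) (zbwd X ! j) = Cmp D (ssl ! Suc j) (zfwd X ! Suc j)))
         else Cmp D (zfwd Y ! i) (rsl ! i) = Cmp D (zbwd Y ! i) (rsl ! Suc i))))"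

definition Zcat :: "('o, 'm) zcat \<Rightarrow> ('o, 'm) zcat" where
  "Zcat D = \<lparr> Ob = {X. is_zig D X}, Ar = {F. is_zmap D F},
     Dom = zsrc, Cod = ztgt,
     Cmp = (\<lambda>G F. AZig (zsrc F) (ztgt G) (map (\<lambda>j. zfs G ! j) (zfs F))
              (map (\<lambda>i. Cmp D (zrsl G ! i) (zrsl F ! hat (zfs G) i)) [0..<Suc (zlen (ztgt G))])
              (map (\<lambda>j. Cmp D (zssl G ! (zfs F ! j)) (zssl F ! j)) [0..<length (zfs F)])),
     Idt = (\<lambda>X. AZig X X [0..<zlen X] (map (Idt D) (zregs X)) (map (Idt D) (zsings X))) \<rparr>"

primrec Zn :: "('o, 'm) cat \<Rightarrow> nat \<Rightarrow> ('o, 'm) zcat" where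
  "Zn C 0 = lift0 C"
| "Zn C (Suc n) = Zcat (Zn C n)"

definition pi_vertical :: "('o, 'm) zar \<Rightarrow> bool" where
  "pi_vertical F \<longleftrightarrow> zlen (zsrc F) = zlen (ztgt F) \<and> zfs F = [0..<zlen (zsrc F)]"

definition pi_cocartesian :: "('o, 'm) zcat \<Rightarrow> ('o, 'm) zar \<Rightarrow> bool" where
  "pi_cocartesian E f \<longleftrightarrow> f \<in> Ar E \<and>
     (\<forall>h\<in>Ar E. Dom E h = Dom E f \<longrightarrow>
        (\<forall>u. mono_map (zlen (Cod E f)) (zlen (Cod E h)) u \<and> map (\<lambda>j. u ! j) (zfs f) = zfs h \<longrightarrow>
           (\<exists>!v. v \<in> Ar E \<and> Dom E v = Cod E f \<and> Cod E v = Cod E h \<and>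
                 Cmp E v f = h \<and> zfs v = u)))"

inductive_set comp_closure :: "('o, 'a) cat \<Rightarrow> 'a set \<Rightarrow> 'a set"
  for C :: "('o, 'a) cat" and G :: "'a set" where
  gen: "f \<in> G \<Longrightarrow> f \<in> comp_closure C G"
| cmp: "f \<in> comp_closure C G \<Longrightarrow> g \<in> comp_closure C G \<Longrightarrow> Cod C f = Dom C g
          \<Longrightarrow> Cmp C g f \<in> comp_closure C G"

text \<open>Simple degeneracy: pi-cocartesian with pi(f) a monomorphism (injective) of Delta_+.\<close>
definition simple_degen_in :: "('o, 'm) zcat \<Rightarrow> ('o, 'm) zar \<Rightarrow> bool" where
  "simple_degen_in E f \<longleftrightarrow> pi_cocartesian E f \<and> distinct (zfs f)"

text \<open>Parallel degeneracy: pi-vertical with all slices degeneracy maps one level down (set S).\<close>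
definition parallel_degen_in :: "('o, 'm) zcat \<Rightarrow> ('o, 'm) zar set \<Rightarrow> ('o, 'm) zar \<Rightarrow> bool" where
  "parallel_degen_in E S f \<longleftrightarrow> f \<in> Ar E \<and> pi_vertical f \<and>
     set (zrsl f) \<subseteq> S \<and> set (zssl f) \<subseteq> S"

primrec degen :: "('o, 'm) cat \<Rightarrow> nat \<Rightarrow> ('o, 'm) zar set" where
  "degen C 0 = {f. is_iso (Zn C 0) f}"
| "degen C (Suc n) = comp_closure (Zn C (Suc n))
     ({f. simple_degen_in (Zn C (Suc n)) f} \<union> {f. parallel_degen_in (Zn C (Suc n)) (degen C n) f})"

definition simple_degen :: "('o, 'm) cat \<Rightarrow> nat \<Rightarrow> ('o, 'm) zar \<Rightarrow> bool" where
  "simple_degen C n f \<longleftrightarrow> simple_degen_in (Zn C n) f"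

definition parallel_degen :: "('o, 'm) cat \<Rightarrow> nat \<Rightarrow> ('o, 'm) zar \<Rightarrow> bool" where
  "parallel_degen C n f \<longleftrightarrow> parallel_degen_in (Zn C n) (degen C (n - 1)) f"

end

theory Submission
  imports Defs
begin

definition hm :: "('o,'a) cat \<Rightarrow> 'o \<Rightarrow> 'o \<Rightarrow> 'a \<Rightarrow> bool" where
  "hm D a b f \<longleftrightarrow> f \<in> Ar D \<and> Dom D f = a \<and> Cod D f = b"

locale zc = fixes D :: "('o,'a) cat" assumes cat: "is_category D"
begin

lemma c1: "f\<in>Ar D \<Longrightarrow> Dom D f \<in> Ob D \<and> Cod D f \<in> Ob D"
  using cat unfolding is_category_def by blast
lemma c2: "a\<in>Ob D \<Longrightarrow> Idt D a \<in> Ar D \<and> Dom D (Idt D a) = a \<and> Cod D (Idt D a) = a"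
  using cat unfolding is_category_def by blast
lemma c3: "f\<in>Ar D \<Longrightarrow> g\<in>Ar D \<Longrightarrow> Cod D f = Dom D g \<Longrightarrow>
        Cmp D g f \<in> Ar D \<and> Dom D (Cmp D g f) = Dom D f \<and> Cod D (Cmp D g f) = Cod D g"
  using cat unfolding is_category_def by blast
lemma c4: "f\<in>Ar D \<Longrightarrow> Cmp D (Idt D (Cod D f)) f = f \<and> Cmp D f (Idt D (Dom D f)) = f"
  using cat unfolding is_category_def by blast
lemma c5: "f\<in>Ar D \<Longrightarrow> g\<in>Ar D \<Longrightarrow> h\<in>Ar D \<Longrightarrow> Cod D f = Dom D g \<Longrightarrow> Cod D g = Dom D h \<Longrightarrow>
        Cmp D h (Cmp D g f) = Cmp D (Cmp D h g) f"
  using cat unfolding is_category_def by blast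

lemma hm_comp: "hm D a b f \<Longrightarrow> hm D b c g \<Longrightarrow> hm D a c (Cmp D g f)"
  using c3 unfolding hm_def by metis

lemma hm_assoc: "hm D a b f \<Longrightarrow> hm D b c g \<Longrightarrow> hm D c d h \<Longrightarrow>
   Cmp D h (Cmp D g f) = Cmp D (Cmp D h g) f"
  using c5 unfolding hm_def by metis

lemma hm_id: "a \<in> Ob D \<Longrightarrow> hm D a a (Idt D a)"
  using c2 unfolding hm_def by metis

lemma id_l: "hm D a b f \<Longrightarrow> Cmp D (Idt D b) f = f"
  using c4 unfolding hm_def by metis

lemma id_r: "hm D a b f \<Longrightarrow> Cmp D f (Idt D a) = f"
  using c4 unfolding hm_def by metis

lemma hm_ob: "hm D a b f \<Longrightarrow> a \<in> Ob D \<and> b \<in> Ob D"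
  using c1 unfolding hm_def by metis

end

lemma hat_le_len: "hat fs i \<le> length fs"
  unfolding hat_def by (rule Min_le) auto

lemma hat_galois:
  assumes "mono_map n m fs" "j < n"
  shows "(hat fs i \<le> j) = (i \<le> fs ! j)"
proof -
  let ?S = "{j. j < length fs \<and> i \<le> fs ! j} \<union> {length fs}"
  have fin: "finite ?S" by auto
  have ln: "length fs = n" using assms unfolding mono_map_def by auto
  show ?thesis
  proof
    assume "i \<le> fs ! j"
    then have "j \<in> ?S" using assms ln by auto
    then show "hat fs i \<le> j" unfolding hat_def using fin by (rule Min_le[rotated])
  next
    assume h: "hat fs i \<le> j"
    have "hat fs i \<in> ?S" unfolding hat_def using fin by (intro Min_in) auto
    then show "i \<le> fs ! j"
    proof
      assume "hat fs i \<in> {j. j < length fs \<and> i \<le> fs ! j}"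
      then have "i \<le> fs ! hat fs i" by auto
      also have "\<dots> \<le> fs ! j" using assms h unfolding mono_map_def by auto
      finally show ?thesis .
    next
      assume "hat fs i \<in> {length fs}"
      then show ?thesis using h ln assms by auto
    qed
  qed
qed

lemma mono_len: "mono_map n m fs \<Longrightarrow> length fs = n"
  unfolding mono_map_def by auto

lemma mono_lt: "mono_map n m fs \<Longrightarrow> j < n \<Longrightarrow> fs ! j < m"
  unfolding mono_map_def by auto

lemma mono_le: "mono_map n m fs \<Longrightarrow> i \<le> j \<Longrightarrow> j < n \<Longrightarrow> fs ! i \<le> fs ! j"
  unfolding mono_map_def by auto

lemma hat_le_n: "mono_map n m fs \<Longrightarrow> hat fs i \<le> n"
  using hat_le_len mono_len by metis

lemma hat_eqI:
  assumes "mono_map n m fs" "a \<le> n" "\<And>j. j < n \<Longrightarrow> (a \<le> j) = (i \<le> fs ! j)"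
  shows "hat fs i = a"
proof (rule ccontr)
  assume ne: "hat fs i \<noteq> a"
  have hn: "hat fs i \<le> n" using hat_le_n assms(1) .
  show False
  proof (cases "hat fs i < a")
    case True
    then have "hat fs i < n" using assms(2) by auto
    then have "i \<le> fs ! hat fs i" using hat_galois[OF assms(1)] by auto
    then have "a \<le> hat fs i" using assms(3) \<open>hat fs i < n\<close> by auto
    then show False using True by auto
  next
    case False
    then have "a < hat fs i" using ne by auto
    then have "a < n" using hn by auto
    then have "i \<le> fs ! a" using assms(3) by auto
    then have "hat fs i \<le> a" using hat_galois[OF assms(1) \<open>a < n\<close>] by auto
    then show False using \<open>a < hat fs i\<close> by auto
  qed
qed

lemma hat_mono: "mono_map n m fs \<Longrightarrow> i \<le> i' \<Longrightarrow> hat fs i \<le> hat fs i'"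
proof (rule ccontr)
  assume a: "mono_map n m fs" "i \<le> i'" "\<not> hat fs i \<le> hat fs i'"
  then have "hat fs i' < n" using hat_le_n[OF a(1), of i] by auto
  then have "i' \<le> fs ! hat fs i'" using hat_galois[OF a(1)] by auto
  then have "hat fs i \<le> hat fs i'" using hat_galois[OF a(1) \<open>hat fs i' < n\<close>] a(2) by auto
  then show False using a by auto
qed

lemma hat_fs_le: "mono_map n m fs \<Longrightarrow> j < n \<Longrightarrow> hat fs (fs ! j) \<le> j"
  using hat_galois by auto

lemma hat_fs_Suc: "mono_map n m fs \<Longrightarrow> j < n \<Longrightarrow> Suc j \<le> hat fs (Suc (fs ! j))"
  using hat_galois[of n m fs j "Suc (fs ! j)"] by auto

lemma mono_comp:
  assumes "mono_map n m \<phi>" "mono_map m k \<gamma>"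
  shows "mono_map n k (map (\<lambda>j. \<gamma> ! j) \<phi>)"
  using assms unfolding mono_map_def by auto

lemma hat_comp:
  assumes "mono_map n m \<phi>" "mono_map m k \<gamma>"
  shows "hat (map (\<lambda>j. \<gamma> ! j) \<phi>) i = hat \<phi> (hat \<gamma> i)"
proof -
  have mc: "mono_map n k (map (\<lambda>j. \<gamma> ! j) \<phi>)" using mono_comp[OF assms] .
  show ?thesis
  proof (rule hat_eqI[OF mc hat_le_n[OF assms(1)]])
    fix j assume j: "j < n"
    have l: "length \<phi> = n" using mono_len assms(1) .
    have pj: "\<phi> ! j < m" using mono_lt assms(1) j .
    have "(hat \<phi> (hat \<gamma> i) \<le> j) = (hat \<gamma> i \<le> \<phi> ! j)" using hat_galois[OF assms(1) j] .
    also have "\<dots> = (i \<le> \<gamma> ! (\<phi> ! j))" using hat_galois[OF assms(2) pj] .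
    finally show "(hat \<phi> (hat \<gamma> i) \<le> j) = (i \<le> map (\<lambda>j. \<gamma> ! j) \<phi> ! j)"
      using j l by simp
  qed
qed

lemma mono_id: "mono_map n n [0..<n]"
  unfolding mono_map_def by auto

lemma hat_id: "i \<le> n \<Longrightarrow> hat [0..<n] i = i"
  by (rule hat_eqI[OF mono_id[of n]]) simp_all

lemma fiber_iv:
  assumes "mono_map n m fs"
  shows "{j. j < n \<and> fs ! j = i} = {hat fs i..<hat fs (Suc i)}"
proof -
  have "j < n \<and> fs ! j = i \<longleftrightarrow> hat fs i \<le> j \<and> j < hat fs (Suc i)" for j
  proof (cases "j < n")
    case True
    then show ?thesis using hat_galois[OF assms True, of i] hat_galois[OF assms True, of "Suc i"] by auto
  next
    case False
    then show ?thesis using hat_le_n[OF assms, of "Suc i"] by auto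
  qed
  then show ?thesis by (simp add: set_eq_iff)
qed

lemma Min_iv: "a < (b::nat) \<Longrightarrow> Min {a..<b} = a"
  by (rule Min_eqI) auto
lemma Max_iv: "a < (b::nat) \<Longrightarrow> Max {a..<b} = b - 1"
  by (rule Max_eqI) auto

lemma fiber_cond_equiv:
  assumes mm: "mono_map n m fs"
  shows "(\<forall>i<m. if {j. j < n \<and> fs ! j = i} \<noteq> {} then
           (let p = Min {j. j < n \<and> fs ! j = i}; q = Max {j. j < n \<and> fs ! j = i} in
             A p i \<and> B q i \<and> (\<forall>j. p \<le> j \<longrightarrow> j < q \<longrightarrow> C j))
         else Dd i)
     \<longleftrightarrow> ((\<forall>j<n. hat fs (fs!j) = j \<longrightarrow> A j (fs!j)) \<and>
          (\<forall>j<n. hat fs (Suc (fs!j)) = Suc j \<longrightarrow> B j (fs!j)) \<and>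
          (\<forall>j. Suc j < n \<longrightarrow> fs!j = fs!Suc j \<longrightarrow> C j) \<and>
          (\<forall>i<m. hat fs i = hat fs (Suc i) \<longrightarrow> Dd i))" (is "?L \<longleftrightarrow> ?R")
proof -
  note fv = fiber_iv[OF mm]
  have hm: "hat fs i \<le> hat fs (Suc i)" for i using hat_mono[OF mm] by auto
  have hn: "hat fs i \<le> n" for i using hat_le_n[OF mm] .
  have mem: "j < n \<and> fs ! j = i \<longleftrightarrow> hat fs i \<le> j \<and> j < hat fs (Suc i)" for i j
    using fv[of i] by (simp add: set_eq_iff)
  show ?thesis
  proof
    assume L: ?L
    have L': "\<And>i. i < m \<Longrightarrow> hat fs i < hat fs (Suc i) \<Longrightarrow>
       A (hat fs i) i \<and> B (hat fs (Suc i) - 1) i \<and> (\<forall>j. hat fs i \<le> j \<longrightarrow> j < hat fs (Suc i) - 1 \<longrightarrow> C j)"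
    proof -
      fix i assume i: "i < m" "hat fs i < hat fs (Suc i)"
      then show "A (hat fs i) i \<and> B (hat fs (Suc i) - 1) i \<and> (\<forall>j. hat fs i \<le> j \<longrightarrow> j < hat fs (Suc i) - 1 \<longrightarrow> C j)"
        using L[rule_format, OF i(1)] by (simp add: fv Min_iv Max_iv Let_def)
    qed
    have L'': "\<And>i. i < m \<Longrightarrow> hat fs i = hat fs (Suc i) \<Longrightarrow> Dd i"
      using L by (simp add: fv)
    show ?R
    proof (intro conjI allI impI)
      fix j assume j: "j < n" "hat fs (fs ! j) = j"
      have "fs ! j < m" using mono_lt[OF mm j(1)] .
      moreover have "hat fs (fs ! j) < hat fs (Suc (fs ! j))" using mem[of j "fs ! j"] j by auto
      ultimately show "A j (fs ! j)" using L' j(2) by metis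
    next
      fix j assume j: "j < n" "hat fs (Suc (fs ! j)) = Suc j"
      have "fs ! j < m" using mono_lt[OF mm j(1)] .
      moreover have "hat fs (fs ! j) < hat fs (Suc (fs ! j))" using mem[of j "fs ! j"] j by auto
      ultimately show "B j (fs ! j)" using L' j(2) by (metis diff_Suc_1)
    next
      fix j assume j: "Suc j < n" "fs ! j = fs ! Suc j"
      let ?i = "fs ! j"
      have a: "hat fs ?i \<le> j" "j < hat fs (Suc ?i)" using mem[of j ?i] j by auto
      have b: "Suc j < hat fs (Suc ?i)" using mem[of "Suc j" ?i] j by auto
      have "?i < m" using mono_lt[OF mm] j by auto
      then show "C j" using L'[of ?i] a b by auto
    next
      fix i assume "i < m" "hat fs i = hat fs (Suc i)"
      then show "Dd i" using L'' by auto
    qed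
  next
    assume R: ?R
    show ?L
    proof (intro allI impI)
      fix i assume i: "i < m"
      show "if {j. j < n \<and> fs ! j = i} \<noteq> {} then
           (let p = Min {j. j < n \<and> fs ! j = i}; q = Max {j. j < n \<and> fs ! j = i} in
             A p i \<and> B q i \<and> (\<forall>j. p \<le> j \<longrightarrow> j < q \<longrightarrow> C j))
         else Dd i"
      proof (cases "hat fs i < hat fs (Suc i)")
        case True
        let ?p = "hat fs i" and ?q = "hat fs (Suc i) - 1"
        have p: "?p < n" "fs ! ?p = i" using mem[of ?p i] True hn[of "Suc i"] by auto
        have q: "?q < n" "fs ! ?q = i" using mem[of ?q i] True hn[of "Suc i"] by auto
        have A: "A ?p i" using R p by metis
        have "hat fs (Suc (fs ! ?q)) = Suc ?q" using q True by simp
        then have B: "B ?q i" using R q by metis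
        have C: "\<forall>j. ?p \<le> j \<longrightarrow> j < ?q \<longrightarrow> C j"
        proof (intro allI impI)
          fix j assume j: "?p \<le> j" "j < ?q"
          have "fs ! j = i" "fs ! Suc j = i" "Suc j < n" using mem[of j i] mem[of "Suc j" i] j by auto
          then show "C j" using R by metis
        qed
        show ?thesis using A B C True by (simp add: fv Min_iv Max_iv Let_def)
      next
        case False
        then have "hat fs i = hat fs (Suc i)" using hm[of i] by auto
        then show ?thesis using R i by (simp add: fv)
      qed
    qed
  qed
qed

locale zz = zc D for D :: "('o,'m) zcat"
begin

lemma zig_D:
  assumes "is_zig D X"
  shows "X = OZig (zregs X) (zsings X) (zfwd X) (zbwd X)" "length (zregs X) = Suc (zlen X)"
    "length (zsings X) = zlen X" "length (zfwd X) = zlen X" "length (zbwd X) = zlen X"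
    "set (zregs X) \<subseteq> Ob D" "set (zsings X) \<subseteq> Ob D"
    "\<And>i. i < zlen X \<Longrightarrow> hm D (zregs X!i) (zsings X!i) (zfwd X!i)"
    "\<And>i. i < zlen X \<Longrightarrow> hm D (zregs X!Suc i) (zsings X!i) (zbwd X!i)"
  using assms unfolding is_zig_def zlen_def hm_def by auto

lemma zig_reg_ob: "is_zig D X \<Longrightarrow> i \<le> zlen X \<Longrightarrow> zregs X ! i \<in> Ob D"
  using zig_D(2,6) by (metis le_imp_less_Suc nth_mem subsetD)
lemma zig_sing_ob: "is_zig D X \<Longrightarrow> i < zlen X \<Longrightarrow> zsings X ! i \<in> Ob D"
  using zig_D(3,7) by (metis nth_mem subsetD)

lemma zig_I:
  assumes "length rs = Suc (length ss)" "length xs = length ss" "length xs' = length ss"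
    "set rs \<subseteq> Ob D" "set ss \<subseteq> Ob D"
    "\<And>i. i < length ss \<Longrightarrow> hm D (rs!i) (ss!i) (xs!i)"
    "\<And>i. i < length ss \<Longrightarrow> hm D (rs!Suc i) (ss!i) (xs'!i)"
  shows "is_zig D (OZig rs ss xs xs')"
  using assms unfolding is_zig_def hm_def by auto

end

definition zmapL :: "('o,'m) zcat \<Rightarrow> ('o,'m) zob \<Rightarrow> ('o,'m) zob \<Rightarrow> nat list \<Rightarrow> ('o,'m) zar list \<Rightarrow> ('o,'m) zar list \<Rightarrow> bool" where
"zmapL D X Y fs rsl ssl \<longleftrightarrow> is_zig D X \<and> is_zig D Y \<and> mono_map (zlen X) (zlen Y) fs \<and>
  length rsl = Suc (zlen Y) \<and> length ssl = zlen X \<and>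
  (\<forall>i\<le>zlen Y. hm D (zregs X ! hat fs i) (zregs Y ! i) (rsl ! i)) \<and>
  (\<forall>j<zlen X. hm D (zsings X ! j) (zsings Y ! (fs ! j)) (ssl ! j)) \<and>
  (\<forall>j<zlen X. hat fs (fs!j) = j \<longrightarrow> Cmp D (ssl!j) (zfwd X!j) = Cmp D (zfwd Y!(fs!j)) (rsl!(fs!j))) \<and>
  (\<forall>j<zlen X. hat fs (Suc (fs!j)) = Suc j \<longrightarrow> Cmp D (ssl!j) (zbwd X!j) = Cmp D (zbwd Y!(fs!j)) (rsl!Suc (fs!j))) \<and>
  (\<forall>j. Suc j < zlen X \<longrightarrow> fs!j = fs!Suc j \<longrightarrow> Cmp D (ssl!j) (zbwd X!j) = Cmp D (ssl!Suc j) (zfwd X!Suc j)) \<and>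
  (\<forall>i<zlen Y. hat fs i = hat fs (Suc i) \<longrightarrow> Cmp D (zfwd Y!i) (rsl!i) = Cmp D (zbwd Y!i) (rsl!Suc i))"

lemma zmap_iff: "is_zmap D (AZig X Y fs rsl ssl) \<longleftrightarrow> zmapL D X Y fs rsl ssl"
proof -
  have *: "mono_map (zlen X) (zlen Y) fs \<Longrightarrow>
    (\<forall>i<zlen Y.
        (if {j. j < zlen X \<and> fs ! j = i} \<noteq> {} then
           (let p = Min {j. j < zlen X \<and> fs ! j = i}; q = Max {j. j < zlen X \<and> fs ! j = i} in
             Cmp D (ssl ! p) (zfwd X ! p) = Cmp D (zfwd Y ! i) (rsl ! i) \<and>
             Cmp D (ssl ! q) (zbwd X ! q) = Cmp D (zbwd Y ! i) (rsl ! Suc i) \<and>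
             (\<forall>j. p \<le> j \<longrightarrow> j < q \<longrightarrow>
                Cmp D (ssl ! j) (zbwd X ! j) = Cmp D (ssl ! Suc j) (zfwd X ! Suc j)))
         else Cmp D (zfwd Y ! i) (rsl ! i) = Cmp D (zbwd Y ! i) (rsl ! Suc i)))
   \<longleftrightarrow>
  ((\<forall>j<zlen X. hat fs (fs!j) = j \<longrightarrow> Cmp D (ssl!j) (zfwd X!j) = Cmp D (zfwd Y!(fs!j)) (rsl!(fs!j))) \<and>
  (\<forall>j<zlen X. hat fs (Suc (fs!j)) = Suc j \<longrightarrow> Cmp D (ssl!j) (zbwd X!j) = Cmp D (zbwd Y!(fs!j)) (rsl!Suc (fs!j))) \<and>
  (\<forall>j. Suc j < zlen X \<longrightarrow> fs!j = fs!Suc j \<longrightarrow> Cmp D (ssl!j) (zbwd X!j) = Cmp D (ssl!Suc j) (zfwd X!Suc j)) \<and>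
  (\<forall>i<zlen Y. hat fs i = hat fs (Suc i) \<longrightarrow> Cmp D (zfwd Y!i) (rsl!i) = Cmp D (zbwd Y!i) (rsl!Suc i)))"
    by (rule fiber_cond_equiv[of "zlen X" "zlen Y" fs
        "\<lambda>p i. Cmp D (ssl ! p) (zfwd X ! p) = Cmp D (zfwd Y ! i) (rsl ! i)"
        "\<lambda>q i. Cmp D (ssl ! q) (zbwd X ! q) = Cmp D (zbwd Y ! i) (rsl ! Suc i)"
        "\<lambda>j. Cmp D (ssl ! j) (zbwd X ! j) = Cmp D (ssl ! Suc j) (zfwd X ! Suc j)"
        "\<lambda>i. Cmp D (zfwd Y ! i) (rsl ! i) = Cmp D (zbwd Y ! i) (rsl ! Suc i)"])
  have ex: "\<And>P. (\<exists>X' Y' fs' rsl' ssl'. AZig X Y fs rsl ssl = AZig X' Y' fs' rsl' ssl' \<and> P X' Y' fs' rsl' ssl')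
     = P X Y fs rsl ssl" by simp
  show ?thesis
  proof (cases "mono_map (zlen X) (zlen Y) fs")
    case True
    show ?thesis unfolding is_zmap_def zmapL_def hm_def ex
      by (simp only: *[OF True])
  next
    case False
    show ?thesis unfolding is_zmap_def zmapL_def ex using False by simp
  qed
qed

lemma zmap_D: "is_zmap D F \<Longrightarrow> F = AZig (zsrc F) (ztgt F) (zfs F) (zrsl F) (zssl F) \<and>
    zmapL D (zsrc F) (ztgt F) (zfs F) (zrsl F) (zssl F)"
proof -
  assume a: "is_zmap D F"
  have "\<exists>X Y fs rsl ssl. F = AZig X Y fs rsl ssl" using a unfolding is_zmap_def
    by (elim exE conjE) blast
  then obtain X Y fs rsl ssl where e: "F = AZig X Y fs rsl ssl" by blast
  show ?thesis using a zmap_iff[of D X Y fs rsl ssl] unfolding e by simp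
qed

context zz begin

lemma zmapL_comp:
  assumes F: "zmapL D X Y \<phi> fr fs" and G: "zmapL D Y Z \<gamma> gr gs"
  shows "zmapL D X Z (map (\<lambda>j. \<gamma>!j) \<phi>) (map (\<lambda>i. Cmp D (gr!i) (fr!hat \<gamma> i)) [0..<Suc (zlen Z)])
     (map (\<lambda>j. Cmp D (gs!(\<phi>!j)) (fs!j)) [0..<length \<phi>])"
proof -
  let ?n = "zlen X" and ?m = "zlen Y" and ?k = "zlen Z"
  let ?\<psi> = "map (\<lambda>j. \<gamma>!j) \<phi>"
  let ?R = "map (\<lambda>i. Cmp D (gr!i) (fr!hat \<gamma> i)) [0..<Suc (zlen Z)]"
  let ?S = "map (\<lambda>j. Cmp D (gs!(\<phi>!j)) (fs!j)) [0..<length \<phi>]"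
  have zX: "is_zig D X" and zY: "is_zig D Y"
    and m\<phi>: "mono_map ?n ?m \<phi>"
    and lfr: "length fr = Suc ?m" and lfs: "length fs = ?n"
    and hfr: "\<And>i. i \<le> ?m \<Longrightarrow> hm D (zregs X ! hat \<phi> i) (zregs Y ! i) (fr ! i)"
    and hfs: "\<And>j. j < ?n \<Longrightarrow> hm D (zsings X ! j) (zsings Y ! (\<phi> ! j)) (fs ! j)"
    and fa: "\<And>j. j < ?n \<Longrightarrow> hat \<phi> (\<phi>!j) = j \<Longrightarrow> Cmp D (fs!j) (zfwd X!j) = Cmp D (zfwd Y!(\<phi>!j)) (fr!(\<phi>!j))"
    and fb: "\<And>j. j < ?n \<Longrightarrow> hat \<phi> (Suc (\<phi>!j)) = Suc j \<Longrightarrow> Cmp D (fs!j) (zbwd X!j) = Cmp D (zbwd Y!(\<phi>!j)) (fr!Suc (\<phi>!j))"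
    and fc: "\<And>j. Suc j < ?n \<Longrightarrow> \<phi>!j = \<phi>!Suc j \<Longrightarrow> Cmp D (fs!j) (zbwd X!j) = Cmp D (fs!Suc j) (zfwd X!Suc j)"
    and fd: "\<And>i. i < ?m \<Longrightarrow> hat \<phi> i = hat \<phi> (Suc i) \<Longrightarrow> Cmp D (zfwd Y!i) (fr!i) = Cmp D (zbwd Y!i) (fr!Suc i)"
    using F unfolding zmapL_def by auto
  have zZ: "is_zig D Z" and m\<gamma>: "mono_map ?m ?k \<gamma>"
    and lgr: "length gr = Suc ?k" and lgs: "length gs = ?m"
    and hgr: "\<And>i. i \<le> ?k \<Longrightarrow> hm D (zregs Y ! hat \<gamma> i) (zregs Z ! i) (gr ! i)"
    and hgs: "\<And>j. j < ?m \<Longrightarrow> hm D (zsings Y ! j) (zsings Z ! (\<gamma> ! j)) (gs ! j)"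
    and ga: "\<And>j. j < ?m \<Longrightarrow> hat \<gamma> (\<gamma>!j) = j \<Longrightarrow> Cmp D (gs!j) (zfwd Y!j) = Cmp D (zfwd Z!(\<gamma>!j)) (gr!(\<gamma>!j))"
    and gb: "\<And>j. j < ?m \<Longrightarrow> hat \<gamma> (Suc (\<gamma>!j)) = Suc j \<Longrightarrow> Cmp D (gs!j) (zbwd Y!j) = Cmp D (zbwd Z!(\<gamma>!j)) (gr!Suc (\<gamma>!j))"
    and gc: "\<And>j. Suc j < ?m \<Longrightarrow> \<gamma>!j = \<gamma>!Suc j \<Longrightarrow> Cmp D (gs!j) (zbwd Y!j) = Cmp D (gs!Suc j) (zfwd Y!Suc j)"
    and gd: "\<And>i. i < ?k \<Longrightarrow> hat \<gamma> i = hat \<gamma> (Suc i) \<Longrightarrow> Cmp D (zfwd Z!i) (gr!i) = Cmp D (zbwd Z!i) (gr!Suc i)"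
    using G unfolding zmapL_def by auto
  have l\<phi>: "length \<phi> = ?n" using mono_len[OF m\<phi>] .
  have hxf: "\<And>i. i < ?n \<Longrightarrow> hm D (zregs X!i) (zsings X!i) (zfwd X!i)" using zig_D(8)[OF zX] .
  have hxb: "\<And>i. i < ?n \<Longrightarrow> hm D (zregs X!Suc i) (zsings X!i) (zbwd X!i)" using zig_D(9)[OF zX] .
  have hyf: "\<And>i. i < ?m \<Longrightarrow> hm D (zregs Y!i) (zsings Y!i) (zfwd Y!i)" using zig_D(8)[OF zY] .
  have hyb: "\<And>i. i < ?m \<Longrightarrow> hm D (zregs Y!Suc i) (zsings Y!i) (zbwd Y!i)" using zig_D(9)[OF zY] .
  have hzf: "\<And>i. i < ?k \<Longrightarrow> hm D (zregs Z!i) (zsings Z!i) (zfwd Z!i)" using zig_D(8)[OF zZ] .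
  have hzb: "\<And>i. i < ?k \<Longrightarrow> hm D (zregs Z!Suc i) (zsings Z!i) (zbwd Z!i)" using zig_D(9)[OF zZ] .
  have m\<psi>: "mono_map ?n ?k ?\<psi>" using mono_comp[OF m\<phi> m\<gamma>] .
  have hat\<psi>: "\<And>i. hat ?\<psi> i = hat \<phi> (hat \<gamma> i)" using hat_comp[OF m\<phi> m\<gamma>] .
  have \<psi>j: "\<And>j. j < ?n \<Longrightarrow> ?\<psi> ! j = \<gamma> ! (\<phi> ! j)" using l\<phi> by simp
  have Rn: "\<And>i. i \<le> ?k \<Longrightarrow> ?R ! i = Cmp D (gr!i) (fr!hat \<gamma> i)"
    by (simp del: upt_Suc add: nth_map_upt)
  have Sn: "\<And>j. j < ?n \<Longrightarrow> ?S ! j = Cmp D (gs!(\<phi>!j)) (fs!j)" using l\<phi> by simp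
  have \<phi>lt: "\<And>j. j < ?n \<Longrightarrow> \<phi>!j < ?m" using mono_lt[OF m\<phi>] .
  have \<gamma>lt: "\<And>j. j < ?m \<Longrightarrow> \<gamma>!j < ?k" using mono_lt[OF m\<gamma>] .
  have hatg_le: "\<And>i. hat \<gamma> i \<le> ?m" using hat_le_n[OF m\<gamma>] .
  have hatf_le: "\<And>i. hat \<phi> i \<le> ?n" using hat_le_n[OF m\<phi>] .
  define E where "E l = Cmp D (gs!l) (Cmp D (zfwd Y!l) (fr!l))" for l
  define E' where "E' l = Cmp D (gs!l) (Cmp D (zbwd Y!l) (fr!Suc l))" for l
  have F1: "\<And>l. l < ?m \<Longrightarrow> hat \<phi> l = hat \<phi> (Suc l) \<Longrightarrow> E l = E' l"
    unfolding E_def E'_def using fd by simp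
  have F2: "\<And>l. Suc l < ?m \<Longrightarrow> \<gamma>!l = \<gamma>!Suc l \<Longrightarrow> E' l = E (Suc l)"
  proof -
    fix l assume l: "Suc l < ?m" "\<gamma>!l = \<gamma>!Suc l"
    have "E' l = Cmp D (Cmp D (gs!l) (zbwd Y!l)) (fr!Suc l)"
      unfolding E'_def using hm_assoc[OF hfr[of "Suc l"] hyb[of l] hgs[of l]] l by simp
    also have "\<dots> = Cmp D (Cmp D (gs!Suc l) (zfwd Y!Suc l)) (fr!Suc l)" using gc l by simp
    also have "\<dots> = E (Suc l)"
      unfolding E_def using hm_assoc[OF hfr[of "Suc l"] hyf[of "Suc l"] hgs[of "Suc l"]] l by simp
    finally show "E' l = E (Suc l)" .
  qed
  have chain0: "\<forall>l. l + d < ?m \<longrightarrow> \<gamma>!l = \<gamma>!(l+d) \<longrightarrow> hat \<phi> l = hat \<phi> (l+d) \<longrightarrow> E l = E (l+d)" for d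
  proof (induction d)
    case 0 then show ?case by simp
  next
    case (Suc d)
    show ?case
    proof (intro allI impI)
      fix l assume a: "l + Suc d < ?m" "\<gamma>!l = \<gamma>!(l + Suc d)" "hat \<phi> l = hat \<phi> (l + Suc d)"
      have g1: "\<gamma>!l \<le> \<gamma>!Suc l" "\<gamma>!Suc l \<le> \<gamma>!(l + Suc d)"
        using mono_le[OF m\<gamma>, of l "Suc l"] mono_le[OF m\<gamma>, of "Suc l" "l + Suc d"] a(1) by linarith+
      have h1: "hat \<phi> l \<le> hat \<phi> (Suc l)" "hat \<phi> (Suc l) \<le> hat \<phi> (l + Suc d)"
        using hat_mono[OF m\<phi>] by auto
      have "E l = E' l" using F1[of l] a h1 by auto
      also have "\<dots> = E (Suc l)" using F2[of l] a g1 by auto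
      also have "\<dots> = E (Suc l + d)" using Suc.IH[rule_format, of "Suc l"] a g1 h1 by auto
      finally show "E l = E (l + Suc d)" by simp
    qed
  qed
  have chain: "\<And>l l'. l \<le> l' \<Longrightarrow> l' < ?m \<Longrightarrow> \<gamma>!l = \<gamma>!l' \<Longrightarrow> hat \<phi> l = hat \<phi> l' \<Longrightarrow> E l = E l'"
    using chain0 by (metis le_add_diff_inverse)
  show ?thesis unfolding zmapL_def
  proof (intro conjI allI impI)
    show "is_zig D X" by fact
    show "is_zig D Z" by fact
    show "mono_map ?n ?k ?\<psi>" by fact
    show "length ?R = Suc ?k" by simp
    show "length ?S = ?n" using l\<phi> by simp
  next
    fix i assume i: "i \<le> ?k"
    show "hm D (zregs X ! hat ?\<psi> i) (zregs Z ! i) (?R ! i)"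
      unfolding Rn[OF i] hat\<psi> by (rule hm_comp[OF hfr[OF hatg_le] hgr[OF i]])
  next
    fix j assume j: "j < ?n"
    show "hm D (zsings X ! j) (zsings Z ! (?\<psi> ! j)) (?S ! j)"
      unfolding Sn[OF j] \<psi>j[OF j] by (rule hm_comp[OF hfs[OF j] hgs[OF \<phi>lt[OF j]]])
  next
    fix j assume j: "j < ?n" and hj0: "hat ?\<psi> (?\<psi> ! j) = j"
    define l where "l = \<phi>!j"
    define i where "i = \<gamma>!l"
    define h where "h = hat \<gamma> i"
    have lm: "l < ?m" unfolding l_def using \<phi>lt[OF j] .
    have ik: "i < ?k" unfolding i_def using \<gamma>lt[OF lm] .
    have hj: "hat \<phi> h = j" using hj0 unfolding \<psi>j[OF j] hat\<psi> h_def i_def l_def .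
    have hl: "h \<le> l" unfolding h_def i_def using hat_fs_le[OF m\<gamma> lm] .
    have hm': "h < ?m" using hl lm by simp
    have h\<phi>l: "hat \<phi> l = j" using hat_mono[OF m\<phi> hl] hat_fs_le[OF m\<phi> j] hj unfolding l_def by simp
    have \<gamma>h: "\<gamma>!h = i"
      using hat_galois[OF m\<gamma> hm', of i] mono_le[OF m\<gamma> hl lm] unfolding h_def i_def by simp
    have gah: "hat \<gamma> (\<gamma>!h) = h" using \<gamma>h by (simp add: h_def)
    have "?S ! j = Cmp D (gs!l) (fs!j)" unfolding Sn[OF j] l_def ..
    then have "Cmp D (?S ! j) (zfwd X ! j) = Cmp D (gs!l) (Cmp D (fs!j) (zfwd X!j))"
      using hm_assoc[OF hxf[OF j] hfs[OF j] hgs[OF \<phi>lt[OF j]]] unfolding l_def by simp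
    also have "\<dots> = E l" unfolding E_def using fa[OF j] h\<phi>l unfolding l_def by simp
    also have "\<dots> = E h" using chain[OF hl lm] \<gamma>h hj h\<phi>l unfolding i_def by simp
    also have "\<dots> = Cmp D (Cmp D (gs!h) (zfwd Y!h)) (fr!h)"
      unfolding E_def using hm_assoc[OF hfr[of h] hyf[OF hm'] hgs[OF hm']] hm' by simp
    also have "\<dots> = Cmp D (Cmp D (zfwd Z!i) (gr!i)) (fr!h)" using ga[OF hm' gah] \<gamma>h by simp
    also have "\<dots> = Cmp D (zfwd Z!i) (Cmp D (gr!i) (fr!h))"
      using hm_assoc[OF hfr[of h] _ hzf[OF ik], of "gr!i"] hgr[of i] ik hm' unfolding h_def by simp
    also have "\<dots> = Cmp D (zfwd Z ! (?\<psi> ! j)) (?R ! (?\<psi> ! j))"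
      unfolding \<psi>j[OF j] using Rn[of i] ik unfolding h_def i_def l_def by simp
    finally show "Cmp D (?S ! j) (zfwd X ! j) = Cmp D (zfwd Z ! (?\<psi> ! j)) (?R ! (?\<psi> ! j))" .
  next
    fix j assume j: "j < ?n" and hj0: "hat ?\<psi> (Suc (?\<psi> ! j)) = Suc j"
    define l where "l = \<phi>!j"
    define i where "i = \<gamma>!l"
    define h' where "h' = hat \<gamma> (Suc i)"
    define q where "q = h' - 1"
    have lm: "l < ?m" unfolding l_def using \<phi>lt[OF j] .
    have ik: "i < ?k" unfolding i_def using \<gamma>lt[OF lm] .
    have hh': "hat \<phi> h' = Suc j" using hj0 unfolding \<psi>j[OF j] hat\<psi> h'_def i_def l_def .
    have lh': "Suc l \<le> h'" unfolding h'_def i_def using hat_fs_Suc[OF m\<gamma> lm] .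
    have h'm: "h' \<le> ?m" unfolding h'_def using hatg_le .
    have lq: "l \<le> q" "q < ?m" "Suc q = h'" using lh' h'm unfolding q_def by auto
    have \<gamma>q: "\<gamma>!q = i"
    proof -
      have "i \<le> \<gamma>!q" using mono_le[OF m\<gamma> lq(1,2)] unfolding i_def .
      moreover have "\<not> Suc i \<le> \<gamma>!q" using hat_galois[OF m\<gamma> lq(2), of "Suc i"] lq(3) unfolding h'_def by simp
      ultimately show ?thesis by simp
    qed
    have gbq: "hat \<gamma> (Suc (\<gamma>!q)) = Suc q" using \<gamma>q lq(3) unfolding h'_def by simp
    have fbj: "hat \<phi> (Suc l) = Suc j"
      using hat_fs_Suc[OF m\<phi> j] hat_mono[OF m\<phi> lh'] hh' unfolding l_def by simp
    have "?S ! j = Cmp D (gs!l) (fs!j)" unfolding Sn[OF j] l_def ..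
    then have "Cmp D (?S ! j) (zbwd X ! j) = Cmp D (gs!l) (Cmp D (fs!j) (zbwd X!j))"
      using hm_assoc[OF hxb[OF j] hfs[OF j] hgs[OF \<phi>lt[OF j]]] unfolding l_def by simp
    also have "\<dots> = E' l" unfolding E'_def using fb[OF j] fbj unfolding l_def by simp
    also have "\<dots> = E' q"
    proof (cases "l = q")
      case False
      then have lq': "Suc l \<le> q" using lq by simp
      have g1: "\<gamma>!(Suc l) = \<gamma>!l" using mono_le[OF m\<gamma> lq' lq(2)]
          mono_le[OF m\<gamma> le_SucI[OF order_refl] order.strict_trans1[OF lq' lq(2)]] \<gamma>q
        unfolding i_def by linarith
      have h1: "hat \<phi> q = Suc j"
        using hat_mono[OF m\<phi> lq'] hat_mono[OF m\<phi>, of q h'] lq fbj hh' by simp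
      have "E' l = E (Suc l)" using F2[of l] g1 lq' lq by simp
      also have "\<dots> = E q" using chain[OF lq' lq(2)] g1 \<gamma>q h1 fbj unfolding i_def by simp
      also have "\<dots> = E' q" using F1[OF lq(2)] h1 hh' lq(3) by simp
      finally show ?thesis .
    qed simp
    also have "\<dots> = Cmp D (Cmp D (gs!q) (zbwd Y!q)) (fr!Suc q)"
      unfolding E'_def using hm_assoc[OF hfr[of "Suc q"] hyb[OF lq(2)] hgs[OF lq(2)]] lq by simp
    also have "\<dots> = Cmp D (Cmp D (zbwd Z!i) (gr!Suc i)) (fr!h')" using gb[OF lq(2) gbq] \<gamma>q lq(3) by simp
    also have "\<dots> = Cmp D (zbwd Z!i) (Cmp D (gr!Suc i) (fr!h'))"
      using hm_assoc[OF hfr[of h'] _ hzb[OF ik], of "gr!Suc i"] hgr[of "Suc i"] ik h'm unfolding h'_def by simp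
    also have "\<dots> = Cmp D (zbwd Z ! (?\<psi> ! j)) (?R ! Suc (?\<psi> ! j))"
      unfolding \<psi>j[OF j] using Rn[of "Suc i"] ik unfolding h'_def i_def l_def by simp
    finally show "Cmp D (?S ! j) (zbwd X ! j) = Cmp D (zbwd Z ! (?\<psi> ! j)) (?R ! Suc (?\<psi> ! j))" .
  next
    fix j assume j: "Suc j < ?n" and e: "?\<psi> ! j = ?\<psi> ! Suc j"
    have j': "j < ?n" using j by simp
    define l where "l = \<phi>!j"
    define l' where "l' = \<phi>!Suc j"
    have ll': "l \<le> l'" unfolding l_def l'_def using mono_le[OF m\<phi> _ j] by simp
    have lm: "l < ?m" "l' < ?m" unfolding l_def l'_def using \<phi>lt j by auto
    have gl: "\<gamma>!l = \<gamma>!l'" using e \<psi>j[OF j'] \<psi>j[OF j] unfolding l_def l'_def by simp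
    have L: "Cmp D (?S ! j) (zbwd X ! j) = Cmp D (gs!l) (Cmp D (fs!j) (zbwd X!j))"
      unfolding Sn[OF j'] l_def using hm_assoc[OF hxb[OF j'] hfs[OF j'] hgs[OF \<phi>lt[OF j']]] by simp
    have R: "Cmp D (?S ! Suc j) (zfwd X ! Suc j) = Cmp D (gs!l') (Cmp D (fs!Suc j) (zfwd X!Suc j))"
      unfolding Sn[OF j] l'_def using hm_assoc[OF hxf[OF j] hfs[OF j] hgs[OF \<phi>lt[OF j]]] by simp
    show "Cmp D (?S ! j) (zbwd X ! j) = Cmp D (?S ! Suc j) (zfwd X ! Suc j)"
    proof (cases "l = l'")
      case True
      then show ?thesis unfolding L R using fc[OF j] unfolding l_def l'_def by simp
    next
      case False
      then have lt: "Suc l \<le> l'" using ll' by simp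
      have fbj: "hat \<phi> (Suc l) = Suc j"
        using hat_fs_Suc[OF m\<phi> j'] hat_galois[OF m\<phi> j, of "Suc l"] lt unfolding l_def l'_def by simp
      have faj: "hat \<phi> l' = Suc j"
        using hat_fs_le[OF m\<phi> j] hat_galois[OF m\<phi> j', of l'] lt unfolding l_def l'_def by simp
      have g1: "\<gamma>!(Suc l) = \<gamma>!l" using mono_le[OF m\<gamma> lt lm(2)]
          mono_le[OF m\<gamma> le_SucI[OF order_refl] order.strict_trans1[OF lt lm(2)]] gl
        by linarith
      have "Cmp D (?S ! j) (zbwd X ! j) = E' l" unfolding L E'_def using fb[OF j'] fbj unfolding l_def by simp
      also have "\<dots> = E (Suc l)" using F2[of l] g1 lt lm by simp
      also have "\<dots> = E l'" using chain[OF lt lm(2)] g1 gl fbj faj by simp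
      also have "\<dots> = Cmp D (?S ! Suc j) (zfwd X ! Suc j)" unfolding R E_def using fa[OF j] faj
        unfolding l'_def by simp
      finally show ?thesis .
    qed
  next
    fix i assume ik: "i < ?k" and e: "hat ?\<psi> i = hat ?\<psi> (Suc i)"
    define h where "h = hat \<gamma> i"
    define h' where "h' = hat \<gamma> (Suc i)"
    have hh: "h \<le> h'" unfolding h_def h'_def using hat_mono[OF m\<gamma>] by simp
    have h'm: "h' \<le> ?m" unfolding h'_def using hatg_le .
    have h\<phi>: "hat \<phi> h = hat \<phi> h'" using e unfolding hat\<psi> h_def h'_def .
    have Ri: "?R ! i = Cmp D (gr!i) (fr!h)" using Rn[of i] ik unfolding h_def by simp
    have RSi: "?R ! Suc i = Cmp D (gr!Suc i) (fr!h')" using Rn[of "Suc i"] ik unfolding h'_def by simp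
    have L: "Cmp D (zfwd Z!i) (?R ! i) = Cmp D (Cmp D (zfwd Z!i) (gr!i)) (fr!h)"
      unfolding Ri using hm_assoc[OF hfr[of h] _ hzf[OF ik], of "gr!i"] hgr[of i] ik hh h'm unfolding h_def by simp
    have R: "Cmp D (zbwd Z!i) (?R ! Suc i) = Cmp D (Cmp D (zbwd Z!i) (gr!Suc i)) (fr!h')"
      unfolding RSi using hm_assoc[OF hfr[of h'] _ hzb[OF ik], of "gr!Suc i"] hgr[of "Suc i"] ik h'm
      unfolding h'_def by simp
    show "Cmp D (zfwd Z!i) (?R ! i) = Cmp D (zbwd Z!i) (?R ! Suc i)"
    proof (cases "h = h'")
      case True
      then show ?thesis unfolding L R using gd[OF ik] unfolding h_def h'_def by simp
    next
      case False
      then have hlt: "h < h'" using hh by simp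
      define q where "q = h' - 1"
      have hq: "h \<le> q" "q < ?m" "Suc q = h'" using hlt h'm unfolding q_def by auto
      have hm': "h < ?m" using hq by simp
      have \<gamma>h: "\<gamma>!h = i"
        using hat_galois[OF m\<gamma> hm', of i] hat_galois[OF m\<gamma> hm', of "Suc i"] hlt unfolding h_def h'_def by simp
      have \<gamma>q: "\<gamma>!q = i"
        using hat_galois[OF m\<gamma> hq(2), of i] hat_galois[OF m\<gamma> hq(2), of "Suc i"] hq unfolding h_def h'_def by simp
      have hq\<phi>: "hat \<phi> h = hat \<phi> q" "hat \<phi> q = hat \<phi> (Suc q)"
        using hat_mono[OF m\<phi> hq(1)] hat_mono[OF m\<phi>, of q h'] hq h\<phi> by simp_all
      have "Cmp D (zfwd Z!i) (?R ! i) = Cmp D (Cmp D (gs!h) (zfwd Y!h)) (fr!h)"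
        unfolding L using ga[OF hm'] \<gamma>h unfolding h_def by simp
      also have "\<dots> = E h" unfolding E_def using hm_assoc[OF hfr[of h] hyf[OF hm'] hgs[OF hm']] hm' by simp
      also have "\<dots> = E q" using chain[OF hq(1,2)] \<gamma>h \<gamma>q hq\<phi> by simp
      also have "\<dots> = E' q" using F1[OF hq(2)] hq\<phi> by simp
      also have "\<dots> = Cmp D (Cmp D (gs!q) (zbwd Y!q)) (fr!Suc q)"
        unfolding E'_def using hm_assoc[OF hfr[of "Suc q"] hyb[OF hq(2)] hgs[OF hq(2)]] hq by simp
      also have "\<dots> = Cmp D (zbwd Z!i) (?R ! Suc i)"
        unfolding R using gb[OF hq(2)] \<gamma>q hq(3) unfolding h'_def by simp
      finally show ?thesis .
    qed
  qed
qed

end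

lemma Zcat_simps:
  "Ob (Zcat D) = {X. is_zig D X}" "Ar (Zcat D) = {F. is_zmap D F}"
  "Dom (Zcat D) = zsrc" "Cod (Zcat D) = ztgt"
  "Cmp (Zcat D) G F = AZig (zsrc F) (ztgt G) (map (\<lambda>j. zfs G ! j) (zfs F))
              (map (\<lambda>i. Cmp D (zrsl G ! i) (zrsl F ! hat (zfs G) i)) [0..<Suc (zlen (ztgt G))])
              (map (\<lambda>j. Cmp D (zssl G ! (zfs F ! j)) (zssl F ! j)) [0..<length (zfs F)])"
  "Idt (Zcat D) X = AZig X X [0..<zlen X] (map (Idt D) (zregs X)) (map (Idt D) (zsings X))"
  unfolding Zcat_def by simp_all

context zz begin

lemma zcomp_zmap:
  assumes "is_zmap D F" "is_zmap D G" "ztgt F = zsrc G"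
  shows "is_zmap D (Cmp (Zcat D) G F)"
proof -
  have F: "zmapL D (zsrc F) (ztgt F) (zfs F) (zrsl F) (zssl F)" using zmap_D[OF assms(1)] by simp
  have G: "zmapL D (zsrc G) (ztgt G) (zfs G) (zrsl G) (zssl G)" using zmap_D[OF assms(2)] by simp
  show ?thesis unfolding Zcat_simps zmap_iff
    using zmapL_comp[OF F G[folded assms(3)]] .
qed

lemma zmapL_facts:
  assumes "zmapL D X Y fs rsl ssl"
  shows "is_zig D X" "is_zig D Y" "mono_map (zlen X) (zlen Y) fs"
   "length rsl = Suc (zlen Y)" "length ssl = zlen X"
   "\<And>i. i\<le>zlen Y \<Longrightarrow> hm D (zregs X ! hat fs i) (zregs Y ! i) (rsl ! i)"
   "\<And>j. j<zlen X \<Longrightarrow> hm D (zsings X ! j) (zsings Y ! (fs ! j)) (ssl ! j)"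
  using assms unfolding zmapL_def by auto

lemma zid_zmap:
  assumes X: "is_zig D X"
  shows "is_zmap D (Idt (Zcat D) X)"
proof -
  let ?n = "zlen X"
  note zD = zig_D[OF X]
  have hx: "\<And>i. i < ?n \<Longrightarrow> hm D (zregs X!i) (zsings X!i) (zfwd X!i)" using zD(8) .
  have hb: "\<And>i. i < ?n \<Longrightarrow> hm D (zregs X!Suc i) (zsings X!i) (zbwd X!i)" using zD(9) .
  have ro: "\<And>i. i \<le> ?n \<Longrightarrow> zregs X ! i \<in> Ob D" using zig_reg_ob[OF X] .
  have so: "\<And>i. i < ?n \<Longrightarrow> zsings X ! i \<in> Ob D" using zig_sing_ob[OF X] .
  have lr: "length (zregs X) = Suc ?n" "length (zsings X) = ?n" using zD by auto
  show ?thesis unfolding Zcat_simps zmap_iff zmapL_def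
  proof (intro conjI allI impI)
    show "is_zig D X" by fact
    show "is_zig D X" by fact
    show "mono_map ?n ?n [0..<?n]" by (rule mono_id)
    show "length (map (Idt D) (zregs X)) = Suc ?n" using lr by simp
    show "length (map (Idt D) (zsings X)) = ?n" using lr by simp
  next
    fix i assume i: "i \<le> ?n"
    show "hm D (zregs X ! hat [0..<?n] i) (zregs X ! i) (map (Idt D) (zregs X) ! i)"
      using hm_id[OF ro[OF i]] hat_id[OF i] lr i by simp
  next
    fix j assume j: "j < ?n"
    show "hm D (zsings X ! j) (zsings X ! ([0..<?n] ! j)) (map (Idt D) (zsings X) ! j)"
      using hm_id[OF so[OF j]] lr j by simp
  next
    fix j assume j: "j < ?n"
    show "Cmp D (map (Idt D) (zsings X) ! j) (zfwd X ! j) =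
        Cmp D (zfwd X ! ([0..<?n] ! j)) (map (Idt D) (zregs X) ! ([0..<?n] ! j))"
      using id_l[OF hx[OF j]] id_r[OF hx[OF j]] lr j by simp
  next
    fix j assume j: "j < ?n"
    show "Cmp D (map (Idt D) (zsings X) ! j) (zbwd X ! j) =
        Cmp D (zbwd X ! ([0..<?n] ! j)) (map (Idt D) (zregs X) ! Suc ([0..<?n] ! j))"
      using id_l[OF hb[OF j]] id_r[OF hb[OF j]] lr j by simp
  next
    fix j assume "Suc j < ?n" "[0..<?n] ! j = [0..<?n] ! Suc j"
    then show "Cmp D (map (Idt D) (zsings X) ! j) (zbwd X ! j) =
       Cmp D (map (Idt D) (zsings X) ! Suc j) (zfwd X ! Suc j)" by simp
  next
    fix i assume "i < ?n" "hat [0..<?n] i = hat [0..<?n] (Suc i)"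
    then show "Cmp D (zfwd X ! i) (map (Idt D) (zregs X) ! i) =
         Cmp D (zbwd X ! i) (map (Idt D) (zregs X) ! Suc i)" using hat_id[of i ?n] hat_id[of "Suc i" ?n] by simp
  qed
qed

lemma zid_left:
  assumes "is_zmap D F"
  shows "Cmp (Zcat D) (Idt (Zcat D) (ztgt F)) F = F"
proof -
  note FD = zmap_D[OF assms]
  note Ff = zmapL_facts[OF conjunct2[OF FD]]
  let ?m = "zlen (ztgt F)"
  have lr: "length (zregs (ztgt F)) = Suc ?m" "length (zsings (ztgt F)) = ?m" using zig_D[OF Ff(2)] by auto
  have e1: "map (\<lambda>j. [0..<?m] ! j) (zfs F) = zfs F"
    by (rule nth_equalityI) (use mono_lt[OF Ff(3)] mono_len[OF Ff(3)] in auto)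
  have e2: "map (\<lambda>i. Cmp D (map (Idt D) (zregs (ztgt F)) ! i) (zrsl F ! hat [0..<?m] i)) [0..<Suc ?m] = zrsl F"
  proof (rule nth_equalityI)
    fix i assume "i < length (map (\<lambda>i. Cmp D (map (Idt D) (zregs (ztgt F)) ! i) (zrsl F ! hat [0..<?m] i)) [0..<Suc ?m])"
    then have i: "i \<le> ?m" by simp
    show "map (\<lambda>i. Cmp D (map (Idt D) (zregs (ztgt F)) ! i) (zrsl F ! hat [0..<?m] i)) [0..<Suc ?m] ! i = zrsl F ! i"
      using id_l[OF Ff(6)[OF i]] hat_id[OF i] lr i by (simp del: upt_Suc add: nth_map_upt)
  qed (simp add: Ff(4))
  have e3: "map (\<lambda>j. Cmp D (map (Idt D) (zsings (ztgt F)) ! (zfs F ! j)) (zssl F ! j)) [0..<length (zfs F)] = zssl F"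
  proof (rule nth_equalityI)
    fix j assume "j < length (map (\<lambda>j. Cmp D (map (Idt D) (zsings (ztgt F)) ! (zfs F ! j)) (zssl F ! j)) [0..<length (zfs F)])"
    then have j: "j < zlen (zsrc F)" using mono_len[OF Ff(3)] by simp
    show "map (\<lambda>j. Cmp D (map (Idt D) (zsings (ztgt F)) ! (zfs F ! j)) (zssl F ! j)) [0..<length (zfs F)] ! j = zssl F ! j"
      using id_l[OF Ff(7)[OF j]] mono_lt[OF Ff(3) j] mono_len[OF Ff(3)] lr j by simp
  qed (simp add: Ff(5) mono_len[OF Ff(3)])
  show ?thesis unfolding Zcat_simps using e1 e2 e3 FD by simp
qed

lemma zid_right:
  assumes "is_zmap D F"
  shows "Cmp (Zcat D) F (Idt (Zcat D) (zsrc F)) = F"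
proof -
  note FD = zmap_D[OF assms]
  note Ff = zmapL_facts[OF conjunct2[OF FD]]
  let ?m = "zlen (ztgt F)" and ?n = "zlen (zsrc F)"
  have lr: "length (zregs (zsrc F)) = Suc ?n" "length (zsings (zsrc F)) = ?n" using zig_D[OF Ff(1)] by auto
  have e1: "map (\<lambda>j. zfs F ! j) [0..<?n] = zfs F"
    by (rule nth_equalityI) (use mono_len[OF Ff(3)] in auto)
  have e2: "map (\<lambda>i. Cmp D (zrsl F ! i) (map (Idt D) (zregs (zsrc F)) ! hat (zfs F) i)) [0..<Suc ?m] = zrsl F"
  proof (rule nth_equalityI)
    fix i assume "i < length (map (\<lambda>i. Cmp D (zrsl F ! i) (map (Idt D) (zregs (zsrc F)) ! hat (zfs F) i)) [0..<Suc ?m])"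
    then have i: "i \<le> ?m" by simp
    have "hat (zfs F) i < length (zregs (zsrc F))" using hat_le_n[OF Ff(3), of i] lr by simp
    then show "map (\<lambda>i. Cmp D (zrsl F ! i) (map (Idt D) (zregs (zsrc F)) ! hat (zfs F) i)) [0..<Suc ?m] ! i = zrsl F ! i"
      using id_r[OF Ff(6)[OF i]] i by (simp del: upt_Suc add: nth_map_upt)
  qed (simp add: Ff(4))
  have e3: "map (\<lambda>j. Cmp D (zssl F ! ([0..<?n] ! j)) (map (Idt D) (zsings (zsrc F)) ! j)) [0..<length [0..<?n]] = zssl F"
  proof (rule nth_equalityI)
    fix j assume "j < length (map (\<lambda>j. Cmp D (zssl F ! ([0..<?n] ! j)) (map (Idt D) (zsings (zsrc F)) ! j)) [0..<length [0..<?n]])"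
    then have j: "j < ?n" by simp
    show "map (\<lambda>j. Cmp D (zssl F ! ([0..<?n] ! j)) (map (Idt D) (zsings (zsrc F)) ! j)) [0..<length [0..<?n]] ! j = zssl F ! j"
      using id_r[OF Ff(7)[OF j]] lr j by simp
  qed (simp add: Ff(5))
  show ?thesis unfolding Zcat_simps using e1 e2 e3 FD by simp
qed

lemma zassoc:
  assumes F: "is_zmap D F" and G: "is_zmap D G" and H: "is_zmap D H"
    and FG: "ztgt F = zsrc G" and GH: "ztgt G = zsrc H"
  shows "Cmp (Zcat D) H (Cmp (Zcat D) G F) = Cmp (Zcat D) (Cmp (Zcat D) H G) F"
proof -
  note Ff = zmapL_facts[OF conjunct2[OF zmap_D[OF F]]]
  note Gf = zmapL_facts[OF conjunct2[OF zmap_D[OF G]]]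
  note Hf = zmapL_facts[OF conjunct2[OF zmap_D[OF H]]]
  have mF: "mono_map (zlen (zsrc F)) (zlen (zsrc G)) (zfs F)" using Ff(3) FG by simp
  have mG: "mono_map (zlen (zsrc G)) (zlen (zsrc H)) (zfs G)" using Gf(3) GH by simp
  have mH: "mono_map (zlen (zsrc H)) (zlen (ztgt H)) (zfs H)" using Hf(3) by simp
  have lF: "length (zfs F) = zlen (zsrc F)" using mono_len[OF mF] .
  have lG: "length (zfs G) = zlen (zsrc G)" using mono_len[OF mG] .
  have e1: "map (\<lambda>j. zfs H ! j) (map (\<lambda>j. zfs G ! j) (zfs F)) = map (\<lambda>j. map (\<lambda>j. zfs H ! j) (zfs G) ! j) (zfs F)"
    using mono_lt[OF mF] lF lG by (auto simp: in_set_conv_nth)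
  have e2: "map (\<lambda>i. Cmp D (zrsl H ! i) (map (\<lambda>i. Cmp D (zrsl G ! i) (zrsl F ! hat (zfs G) i)) [0..<Suc (zlen (ztgt G))] ! hat (zfs H) i)) [0..<Suc (zlen (ztgt H))]
     = map (\<lambda>i. Cmp D (map (\<lambda>i. Cmp D (zrsl H ! i) (zrsl G ! hat (zfs H) i)) [0..<Suc (zlen (ztgt H))] ! i) (zrsl F ! hat (map (\<lambda>j. zfs H ! j) (zfs G)) i)) [0..<Suc (zlen (ztgt H))]"
  proof (rule nth_equalityI)
    fix i assume "i < length (map (\<lambda>i. Cmp D (zrsl H ! i) (map (\<lambda>i. Cmp D (zrsl G ! i) (zrsl F ! hat (zfs G) i)) [0..<Suc (zlen (ztgt G))] ! hat (zfs H) i)) [0..<Suc (zlen (ztgt H))])"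
    then have i: "i \<le> zlen (ztgt H)" by simp
    have hi: "hat (zfs H) i \<le> zlen (ztgt G)" using hat_le_n[OF mH] GH by simp
    have a1: "hm D (zregs (zsrc F) ! hat (zfs F) (hat (zfs G) (hat (zfs H) i))) (zregs (zsrc G) ! hat (zfs G) (hat (zfs H) i)) (zrsl F ! hat (zfs G) (hat (zfs H) i))"
      using Ff(6)[of "hat (zfs G) (hat (zfs H) i)"] hat_le_n[OF mG] FG by simp
    have a2: "hm D (zregs (zsrc G) ! hat (zfs G) (hat (zfs H) i)) (zregs (zsrc H) ! hat (zfs H) i) (zrsl G ! hat (zfs H) i)"
      using Gf(6)[OF hi] GH by simp
    have a3: "hm D (zregs (zsrc H) ! hat (zfs H) i) (zregs (ztgt H) ! i) (zrsl H ! i)" using Hf(6)[OF i] .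
    show "map (\<lambda>i. Cmp D (zrsl H ! i) (map (\<lambda>i. Cmp D (zrsl G ! i) (zrsl F ! hat (zfs G) i)) [0..<Suc (zlen (ztgt G))] ! hat (zfs H) i)) [0..<Suc (zlen (ztgt H))] ! i =
          map (\<lambda>i. Cmp D (map (\<lambda>i. Cmp D (zrsl H ! i) (zrsl G ! hat (zfs H) i)) [0..<Suc (zlen (ztgt H))] ! i) (zrsl F ! hat (map (\<lambda>j. zfs H ! j) (zfs G)) i)) [0..<Suc (zlen (ztgt H))] ! i"
      using i hi hm_assoc[OF a1 a2 a3] hat_comp[OF mG mH]
      by (simp del: upt_Suc add: nth_map_upt less_Suc_eq_le)
  qed simp
  have e3: "map (\<lambda>j. Cmp D (zssl H ! (map (\<lambda>j. zfs G ! j) (zfs F) ! j)) (map (\<lambda>j. Cmp D (zssl G ! (zfs F ! j)) (zssl F ! j)) [0..<length (zfs F)] ! j)) [0..<length (map (\<lambda>j. zfs G ! j) (zfs F))]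
      = map (\<lambda>j. Cmp D (map (\<lambda>j. Cmp D (zssl H ! (zfs G ! j)) (zssl G ! j)) [0..<length (zfs G)] ! (zfs F ! j)) (zssl F ! j)) [0..<length (zfs F)]"
  proof (rule nth_equalityI)
    fix j assume "j < length (map (\<lambda>j. Cmp D (zssl H ! (map (\<lambda>j. zfs G ! j) (zfs F) ! j)) (map (\<lambda>j. Cmp D (zssl G ! (zfs F ! j)) (zssl F ! j)) [0..<length (zfs F)] ! j)) [0..<length (map (\<lambda>j. zfs G ! j) (zfs F))])"
    then have j: "j < zlen (zsrc F)" using lF by simp
    have fj: "zfs F ! j < zlen (zsrc G)" using mono_lt[OF mF j] .
    have a1: "hm D (zsings (zsrc F) ! j) (zsings (zsrc G) ! (zfs F ! j)) (zssl F ! j)" using Ff(7)[OF j] FG by simp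
    have a2: "hm D (zsings (zsrc G) ! (zfs F ! j)) (zsings (zsrc H) ! (zfs G ! (zfs F ! j))) (zssl G ! (zfs F ! j))"
      using Gf(7)[OF fj] GH by simp
    have a3: "hm D (zsings (zsrc H) ! (zfs G ! (zfs F ! j))) (zsings (ztgt H) ! (zfs H ! (zfs G ! (zfs F ! j)))) (zssl H ! (zfs G ! (zfs F ! j)))"
      using Hf(7)[OF mono_lt[OF mG fj]] .
    show "map (\<lambda>j. Cmp D (zssl H ! (map (\<lambda>j. zfs G ! j) (zfs F) ! j)) (map (\<lambda>j. Cmp D (zssl G ! (zfs F ! j)) (zssl F ! j)) [0..<length (zfs F)] ! j)) [0..<length (map (\<lambda>j. zfs G ! j) (zfs F))] ! j
      = map (\<lambda>j. Cmp D (map (\<lambda>j. Cmp D (zssl H ! (zfs G ! j)) (zssl G ! j)) [0..<length (zfs G)] ! (zfs F ! j)) (zssl F ! j)) [0..<length (zfs F)] ! j"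
      using j fj lF lG hm_assoc[OF a1 a2 a3] by simp
  qed simp
  show ?thesis unfolding Zcat_simps using e1 e2 e3 by simp
qed

lemma Zcat_cat: "is_category (Zcat D)"
  unfolding is_category_def
proof (intro conjI ballI impI)
  fix f assume "f \<in> Ar (Zcat D)"
  then have "is_zmap D f" by (simp add: Zcat_simps)
  note Ff = zmapL_facts[OF conjunct2[OF zmap_D[OF this]]]
  show "Dom (Zcat D) f \<in> Ob (Zcat D)" using Ff(1) by (simp add: Zcat_simps)
  show "Cod (Zcat D) f \<in> Ob (Zcat D)" using Ff(2) by (simp add: Zcat_simps)
next
  fix a assume "a \<in> Ob (Zcat D)"
  then have a: "is_zig D a" by (simp add: Zcat_simps)
  show "Idt (Zcat D) a \<in> Ar (Zcat D)" using zid_zmap[OF a] by (simp add: Zcat_simps)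
  show "Dom (Zcat D) (Idt (Zcat D) a) = a" by (simp add: Zcat_simps)
  show "Cod (Zcat D) (Idt (Zcat D) a) = a" by (simp add: Zcat_simps)
next
  fix f g assume "f \<in> Ar (Zcat D)" "g \<in> Ar (Zcat D)" "Cod (Zcat D) f = Dom (Zcat D) g"
  then have a: "is_zmap D f" "is_zmap D g" "ztgt f = zsrc g" by (simp_all add: Zcat_simps)
  show "Cmp (Zcat D) g f \<in> Ar (Zcat D)" using zcomp_zmap[OF a] by (simp add: Zcat_simps del: Zcat_simps(5))
  show "Dom (Zcat D) (Cmp (Zcat D) g f) = Dom (Zcat D) f" by (simp add: Zcat_simps)
  show "Cod (Zcat D) (Cmp (Zcat D) g f) = Cod (Zcat D) g" by (simp add: Zcat_simps)
next
  fix f assume "f \<in> Ar (Zcat D)"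
  then have a: "is_zmap D f" by (simp add: Zcat_simps)
  show "Cmp (Zcat D) (Idt (Zcat D) (Cod (Zcat D) f)) f = f" using zid_left[OF a] by (simp add: Zcat_simps(4))
  show "Cmp (Zcat D) f (Idt (Zcat D) (Dom (Zcat D) f)) = f" using zid_right[OF a] by (simp add: Zcat_simps(3))
next
  fix f g h assume "f \<in> Ar (Zcat D)" "g \<in> Ar (Zcat D)" "h \<in> Ar (Zcat D)"
    "Cod (Zcat D) f = Dom (Zcat D) g" "Cod (Zcat D) g = Dom (Zcat D) h"
  then have a: "is_zmap D f" "is_zmap D g" "is_zmap D h" "ztgt f = zsrc g" "ztgt g = zsrc h"
    by (simp_all add: Zcat_simps)
  show "Cmp (Zcat D) h (Cmp (Zcat D) g f) = Cmp (Zcat D) (Cmp (Zcat D) h g) f" using zassoc[OF a] .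
qed

end

definition inim :: "nat list \<Rightarrow> nat \<Rightarrow> bool" where
  "inim \<phi> j \<longleftrightarrow> hat \<phi> j < length \<phi> \<and> \<phi> ! hat \<phi> j = j"

definition lob :: "('o,'m) zcat \<Rightarrow> ('o,'m) zob \<Rightarrow> nat list \<Rightarrow> nat \<Rightarrow> ('o,'m) zob" where
  "lob D X \<phi> m = OZig (map (\<lambda>i. zregs X ! hat \<phi> i) [0..<Suc m])
     (map (\<lambda>j. if inim \<phi> j then zsings X ! hat \<phi> j else zregs X ! hat \<phi> j) [0..<m])
     (map (\<lambda>j. if inim \<phi> j then zfwd X ! hat \<phi> j else Idt D (zregs X ! hat \<phi> j)) [0..<m])
     (map (\<lambda>j. if inim \<phi> j then zbwd X ! hat \<phi> j else Idt D (zregs X ! hat \<phi> j)) [0..<m])"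

definition lar :: "('o,'m) zcat \<Rightarrow> ('o,'m) zob \<Rightarrow> nat list \<Rightarrow> nat \<Rightarrow> ('o,'m) zar" where
  "lar D X \<phi> m = AZig X (lob D X \<phi> m) \<phi> (map (\<lambda>i. Idt D (zregs X ! hat \<phi> i)) [0..<Suc m])
     (map (\<lambda>j. Idt D (zsings X ! j)) [0..<length \<phi>])"

locale smono =
  fixes \<phi> :: "nat list" and n m :: nat
  assumes mm: "mono_map n m \<phi>" and dist: "distinct \<phi>"
begin

lemma len: "length \<phi> = n" using mono_len[OF mm] .

lemma slt: "j < k \<Longrightarrow> k < n \<Longrightarrow> \<phi>!j < \<phi>!k"
  using mono_le[OF mm, of j k] dist len nth_eq_iff_index_eq[OF dist, of j k] by fastforce

lemma hat_phi: "k < n \<Longrightarrow> hat \<phi> (\<phi>!k) = k"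
proof (rule hat_eqI[OF mm])
  fix j assume "k < n" "j < n"
  then show "(k \<le> j) = (\<phi> ! k \<le> \<phi> ! j)"
    using slt[of j k] mono_le[OF mm, of k j] by (meson leD le_less_linear)
qed simp

lemma hat_phi_Suc: "k < n \<Longrightarrow> hat \<phi> (Suc (\<phi>!k)) = Suc k"
proof (rule hat_eqI[OF mm])
  fix j assume "k < n" "j < n"
  then show "(Suc k \<le> j) = (Suc (\<phi> ! k) \<le> \<phi> ! j)"
    using slt[of k j] mono_le[OF mm, of j k] by (meson Suc_le_eq leD le_less_linear)
qed simp

lemma inim_iff: "inim \<phi> j \<longleftrightarrow> (\<exists>k<n. \<phi>!k = j)"
proof
  assume "inim \<phi> j" then show "\<exists>k<n. \<phi>!k = j" unfolding inim_def len by blast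
next
  assume "\<exists>k<n. \<phi>!k = j"
  then obtain k where "k < n" "\<phi>!k = j" by blast
  then show "inim \<phi> j" unfolding inim_def len using hat_phi[of k] by simp
qed

lemma inim_phi: "k < n \<Longrightarrow> inim \<phi> (\<phi>!k)"
  using inim_iff by auto

lemma nonim_hat_Suc: "\<not> inim \<phi> j \<Longrightarrow> hat \<phi> (Suc j) = hat \<phi> j"
proof (rule hat_eqI[OF mm])
  show "hat \<phi> j \<le> n" using hat_le_n[OF mm] .
  fix k assume a: "\<not> inim \<phi> j" "k < n"
  then have "\<phi>!k \<noteq> j" using inim_iff by auto
  moreover have "(hat \<phi> j \<le> k) = (j \<le> \<phi> ! k)" using hat_galois[OF mm a(2)] .
  ultimately show "(hat \<phi> j \<le> k) = (Suc j \<le> \<phi> ! k)" by arith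
qed

lemma inim_hat_Suc: "inim \<phi> j \<Longrightarrow> hat \<phi> (Suc j) = Suc (hat \<phi> j)"
  using hat_phi_Suc[of "hat \<phi> j"] unfolding inim_def len by simp

lemma inim_lt: "inim \<phi> j \<Longrightarrow> hat \<phi> j < n" unfolding inim_def len by simp
lemma inim_eq: "inim \<phi> j \<Longrightarrow> \<phi> ! hat \<phi> j = j" unfolding inim_def by simp

end

context zz begin

lemma lob_sel:
  "zlen (lob D X \<phi> m) = m"
  "i \<le> m \<Longrightarrow> zregs (lob D X \<phi> m) ! i = zregs X ! hat \<phi> i"
  "j < m \<Longrightarrow> zsings (lob D X \<phi> m) ! j = (if inim \<phi> j then zsings X ! hat \<phi> j else zregs X ! hat \<phi> j)"
  "j < m \<Longrightarrow> zfwd (lob D X \<phi> m) ! j = (if inim \<phi> j then zfwd X ! hat \<phi> j else Idt D (zregs X ! hat \<phi> j))"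
  "j < m \<Longrightarrow> zbwd (lob D X \<phi> m) ! j = (if inim \<phi> j then zbwd X ! hat \<phi> j else Idt D (zregs X ! hat \<phi> j))"
  "length (zregs (lob D X \<phi> m)) = Suc m"
  unfolding lob_def zlen_def by (simp_all del: upt_Suc add: nth_map_upt less_Suc_eq_le)


lemma lob_zig:
  assumes X: "is_zig D X" and sm: "smono \<phi> (zlen X) m"
  shows "is_zig D (lob D X \<phi> m)"
proof -
  interpret smono \<phi> "zlen X" m by fact
  note zD = zig_D[OF X]
  have hn: "\<And>i. hat \<phi> i \<le> zlen X" using hat_le_n[OF mm] .
  have ro: "\<And>i. zregs X ! hat \<phi> i \<in> Ob D" using zig_reg_ob[OF X hn] .
  show ?thesis unfolding lob_def
  proof (rule zig_I)
    show "set (map (\<lambda>i. zregs X ! hat \<phi> i) [0..<Suc m]) \<subseteq> Ob D" using ro by auto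
    show "set (map (\<lambda>j. if inim \<phi> j then zsings X ! hat \<phi> j else zregs X ! hat \<phi> j) [0..<m]) \<subseteq> Ob D"
      using ro zig_sing_ob[OF X inim_lt] by auto
  next
    fix j assume "j < length (map (\<lambda>j. if inim \<phi> j then zsings X ! hat \<phi> j else zregs X ! hat \<phi> j) [0..<m])"
    then have j: "j < m" by simp
    show "hm D (map (\<lambda>i. zregs X ! hat \<phi> i) [0..<Suc m] ! j)
          (map (\<lambda>j. if inim \<phi> j then zsings X ! hat \<phi> j else zregs X ! hat \<phi> j) [0..<m] ! j)
          (map (\<lambda>j. if inim \<phi> j then zfwd X ! hat \<phi> j else Idt D (zregs X ! hat \<phi> j)) [0..<m] ! j)"
      using j zD(8)[OF inim_lt] hm_id[OF ro] by (simp del: upt_Suc add: nth_map_upt)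
    show "hm D (map (\<lambda>i. zregs X ! hat \<phi> i) [0..<Suc m] ! Suc j)
          (map (\<lambda>j. if inim \<phi> j then zsings X ! hat \<phi> j else zregs X ! hat \<phi> j) [0..<m] ! j)
          (map (\<lambda>j. if inim \<phi> j then zbwd X ! hat \<phi> j else Idt D (zregs X ! hat \<phi> j)) [0..<m] ! j)"
      using j zD(9)[OF inim_lt] hm_id[OF ro] inim_hat_Suc nonim_hat_Suc
      by (simp del: upt_Suc add: nth_map_upt)
  qed simp_all
qed

lemma lar_zmap:
  assumes X: "is_zig D X" and sm: "smono \<phi> (zlen X) m"
  shows "is_zmap D (lar D X \<phi> m)"
proof -
  interpret smono \<phi> "zlen X" m by fact
  note zD = zig_D[OF X]
  let ?X' = "lob D X \<phi> m"
  have hn: "\<And>i. hat \<phi> i \<le> zlen X" using hat_le_n[OF mm] .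
  have ro: "\<And>i. zregs X ! hat \<phi> i \<in> Ob D" using zig_reg_ob[OF X hn] .
  have so: "\<And>j. j < zlen X \<Longrightarrow> zsings X ! j \<in> Ob D" using zig_sing_ob[OF X] .
  have \<phi>lt: "\<And>j. j < zlen X \<Longrightarrow> \<phi>!j < m" using mono_lt[OF mm] .
  show ?thesis unfolding lar_def zmap_iff zmapL_def lob_sel
  proof (intro conjI allI impI)
    show "is_zig D X" by fact
    show "is_zig D ?X'" by (rule lob_zig[OF X sm])
    show "mono_map (zlen X) m \<phi>" by (rule mm)
    show "length (map (\<lambda>i. Idt D (zregs X ! hat \<phi> i)) [0..<Suc m]) = Suc m" by simp
    show "length (map (\<lambda>j. Idt D (zsings X ! j)) [0..<length \<phi>]) = zlen X" using len by simp
  next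
    fix i assume i: "i \<le> m"
    show "hm D (zregs X ! hat \<phi> i) (zregs ?X' ! i) (map (\<lambda>i. Idt D (zregs X ! hat \<phi> i)) [0..<Suc m] ! i)"
    proof -
      have e: "zregs ?X' ! i = zregs X ! hat \<phi> i" by (rule lob_sel(2)[OF i])
      show ?thesis unfolding e using i hm_id[OF ro] by (simp del: upt_Suc add: nth_map_upt)
    qed
  next
    fix j assume j: "j < zlen X"
    show "hm D (zsings X ! j) (zsings ?X' ! (\<phi> ! j)) (map (\<lambda>j. Idt D (zsings X ! j)) [0..<length \<phi>] ! j)"
      using j hm_id[OF so[OF j]] lob_sel(3)[OF \<phi>lt[OF j]] inim_phi[OF j] hat_phi[OF j] len by simp
  next
    fix j assume j: "j < zlen X"
    show "Cmp D (map (\<lambda>j. Idt D (zsings X ! j)) [0..<length \<phi>] ! j) (zfwd X ! j) =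
          Cmp D (zfwd ?X' ! (\<phi> ! j)) (map (\<lambda>i. Idt D (zregs X ! hat \<phi> i)) [0..<Suc m] ! (\<phi> ! j))"
      using j lob_sel(4)[OF \<phi>lt[OF j]] inim_phi[OF j] hat_phi[OF j] len \<phi>lt[OF j]
        id_l[OF zD(8)[OF j]] id_r[OF zD(8)[OF j]]
      by (simp del: upt_Suc add: nth_map_upt)
  next
    fix j assume j: "j < zlen X"
    show "Cmp D (map (\<lambda>j. Idt D (zsings X ! j)) [0..<length \<phi>] ! j) (zbwd X ! j) =
          Cmp D (zbwd ?X' ! (\<phi> ! j)) (map (\<lambda>i. Idt D (zregs X ! hat \<phi> i)) [0..<Suc m] ! Suc (\<phi> ! j))"
      using j lob_sel(5)[OF \<phi>lt[OF j]] inim_phi[OF j] hat_phi[OF j] hat_phi_Suc[OF j] len \<phi>lt[OF j]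
        id_l[OF zD(9)[OF j]] id_r[OF zD(9)[OF j]]
      by (simp del: upt_Suc add: nth_map_upt)
  next
    fix j assume j: "Suc j < zlen X" "\<phi> ! j = \<phi> ! Suc j"
    then show "Cmp D (map (\<lambda>j. Idt D (zsings X ! j)) [0..<length \<phi>] ! j) (zbwd X ! j) =
       Cmp D (map (\<lambda>j. Idt D (zsings X ! j)) [0..<length \<phi>] ! Suc j) (zfwd X ! Suc j)"
      using slt[of j "Suc j"] by simp
  next
    fix i assume i: "i < m" "hat \<phi> i = hat \<phi> (Suc i)"
    have ni: "\<not> inim \<phi> i" using i(2) inim_hat_Suc by auto
    show "Cmp D (zfwd ?X' ! i) (map (\<lambda>i. Idt D (zregs X ! hat \<phi> i)) [0..<Suc m] ! i) =
          Cmp D (zbwd ?X' ! i) (map (\<lambda>i. Idt D (zregs X ! hat \<phi> i)) [0..<Suc m] ! Suc i)"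
      using i ni lob_sel(4,5)[OF i(1)] by (simp del: upt_Suc add: nth_map_upt)
  qed
qed

end

context zz begin

lemma lift_comp_eq:
  assumes X: "is_zig D X" and sm: "smono \<phi> (zlen X) m"
    and V: "zmapL D (lob D X \<phi> m) Y u r s"
  shows "Cmp (Zcat D) (AZig (lob D X \<phi> m) Y u r s) (lar D X \<phi> m) =
     AZig X Y (map (\<lambda>j. u!j) \<phi>) r (map (\<lambda>k. s!(\<phi>!k)) [0..<zlen X])"
proof -
  interpret smono \<phi> "zlen X" m by fact
  note Vf = zmapL_facts[OF V]
  have mu: "mono_map m (zlen Y) u" using Vf(3) lob_sel(1) by simp
  have e2: "map (\<lambda>i. Cmp D (r ! i) (map (\<lambda>i. Idt D (zregs X ! hat \<phi> i)) [0..<Suc m] ! hat u i)) [0..<Suc (zlen Y)] = r"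
  proof (rule nth_equalityI)
    show "length (map (\<lambda>i. Cmp D (r ! i) (map (\<lambda>i. Idt D (zregs X ! hat \<phi> i)) [0..<Suc m] ! hat u i)) [0..<Suc (zlen Y)]) = length r"
      using Vf(4) by simp
    fix i assume "i < length (map (\<lambda>i. Cmp D (r ! i) (map (\<lambda>i. Idt D (zregs X ! hat \<phi> i)) [0..<Suc m] ! hat u i)) [0..<Suc (zlen Y)])"
    then have i: "i \<le> zlen Y" by simp
    have hu: "hat u i \<le> m" using hat_le_n[OF mu] .
    have t: "hm D (zregs X ! hat \<phi> (hat u i)) (zregs Y ! i) (r ! i)"
      using Vf(6)[OF i] lob_sel(2)[OF hu] by simp
    show "map (\<lambda>i. Cmp D (r ! i) (map (\<lambda>i. Idt D (zregs X ! hat \<phi> i)) [0..<Suc m] ! hat u i)) [0..<Suc (zlen Y)] ! i = r ! i"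
      using i hu id_r[OF t] by (simp del: upt_Suc add: nth_map_upt less_Suc_eq_le)
  qed
  have e3: "map (\<lambda>j. Cmp D (s ! (\<phi> ! j)) (map (\<lambda>j. Idt D (zsings X ! j)) [0..<length \<phi>] ! j)) [0..<length \<phi>]
      = map (\<lambda>k. s!(\<phi>!k)) [0..<zlen X]"
  proof (rule nth_equalityI)
    fix j assume "j < length (map (\<lambda>j. Cmp D (s ! (\<phi> ! j)) (map (\<lambda>j. Idt D (zsings X ! j)) [0..<length \<phi>] ! j)) [0..<length \<phi>])"
    then have j: "j < zlen X" using len by simp
    have pj: "\<phi>!j < m" using mono_lt[OF mm j] .
    have t: "hm D (zsings X ! j) (zsings Y ! (u ! (\<phi> ! j))) (s ! (\<phi> ! j))"
      using Vf(7)[of "\<phi>!j"] pj lob_sel(1) lob_sel(3)[OF pj] inim_phi[OF j] hat_phi[OF j] by simp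
    show "map (\<lambda>j. Cmp D (s ! (\<phi> ! j)) (map (\<lambda>j. Idt D (zsings X ! j)) [0..<length \<phi>] ! j)) [0..<length \<phi>] ! j
      = map (\<lambda>k. s!(\<phi>!k)) [0..<zlen X] ! j"
      using j len id_r[OF t] by simp
  qed (simp add: len)
  show ?thesis unfolding Zcat_simps lar_def using e2 e3 by simp
qed

lemma lift_uniq:
  assumes X: "is_zig D X" and sm: "smono \<phi> (zlen X) m"
    and V1: "zmapL D (lob D X \<phi> m) Y u r s1" and V2: "zmapL D (lob D X \<phi> m) Y u r s2"
    and eq: "\<And>k. k < zlen X \<Longrightarrow> s1!(\<phi>!k) = s2!(\<phi>!k)"
  shows "s1 = s2"
proof -
  interpret smono \<phi> "zlen X" m by fact
  let ?X' = "lob D X \<phi> m"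
  note V1f = zmapL_facts[OF V1] and V2f = zmapL_facts[OF V2]
  have mu: "mono_map m (zlen Y) u" using V1f(3) lob_sel(1) by simp
  have b1: "\<And>j. j < m \<Longrightarrow> hat u (Suc (u!j)) = Suc j \<Longrightarrow> Cmp D (s1!j) (zbwd ?X'!j) = Cmp D (zbwd Y!(u!j)) (r!Suc (u!j))"
    using V1 lob_sel(1) unfolding zmapL_def by auto
  have b2: "\<And>j. j < m \<Longrightarrow> hat u (Suc (u!j)) = Suc j \<Longrightarrow> Cmp D (s2!j) (zbwd ?X'!j) = Cmp D (zbwd Y!(u!j)) (r!Suc (u!j))"
    using V2 lob_sel(1) unfolding zmapL_def by auto
  have c1: "\<And>j. Suc j < m \<Longrightarrow> u!j = u!Suc j \<Longrightarrow> Cmp D (s1!j) (zbwd ?X'!j) = Cmp D (s1!Suc j) (zfwd ?X'!Suc j)"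
    using V1 lob_sel(1) unfolding zmapL_def by auto
  have c2: "\<And>j. Suc j < m \<Longrightarrow> u!j = u!Suc j \<Longrightarrow> Cmp D (s2!j) (zbwd ?X'!j) = Cmp D (s2!Suc j) (zfwd ?X'!Suc j)"
    using V2 lob_sel(1) unfolding zmapL_def by auto
  have t1: "\<And>j. j < m \<Longrightarrow> hm D (zsings ?X' ! j) (zsings Y ! (u ! j)) (s1 ! j)" using V1f(7) lob_sel(1) by simp
  have t2: "\<And>j. j < m \<Longrightarrow> hm D (zsings ?X' ! j) (zsings Y ! (u ! j)) (s2 ! j)" using V2f(7) lob_sel(1) by simp
  have idb: "\<And>j. j < m \<Longrightarrow> \<not> inim \<phi> j \<Longrightarrow> zbwd ?X' ! j = Idt D (zsings ?X' ! j)"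
    using lob_sel(3,5) by simp
  have idf: "\<And>j. j < m \<Longrightarrow> \<not> inim \<phi> j \<Longrightarrow> zfwd ?X' ! j = Idt D (zsings ?X' ! j)"
    using lob_sel(3,4) by simp
  have main: "\<forall>j. j < m \<longrightarrow> m - j \<le> d \<longrightarrow> s1!j = s2!j" for d
  proof (induction d)
    case 0 then show ?case by simp
  next
    case (Suc d)
    show ?case
    proof (intro allI impI)
      fix j assume j: "j < m" "m - j \<le> Suc d"
      show "s1!j = s2!j"
      proof (cases "inim \<phi> j")
        case True
        then obtain k where "k < zlen X" "\<phi>!k = j" using inim_iff by blast
        then show ?thesis using eq by blast
      next
        case ni: False
        have r1: "Cmp D (s1!j) (zbwd ?X'!j) = s1!j" using id_r[OF t1[OF j(1)]] idb[OF j(1) ni] by simp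
        have r2: "Cmp D (s2!j) (zbwd ?X'!j) = s2!j" using id_r[OF t2[OF j(1)]] idb[OF j(1) ni] by simp
        show ?thesis
        proof (cases "hat u (Suc (u!j)) = Suc j")
          case True
          then show ?thesis using b1[OF j(1) True] b2[OF j(1) True] r1 r2 by simp
        next
          case False
          have ge: "Suc j \<le> hat u (Suc (u!j))" using hat_fs_Suc[OF mu j(1)] .
          have sj: "Suc j < m"
          proof (rule ccontr)
            assume "\<not> Suc j < m"
            then have "Suc j = m" using j by simp
            then show False using hat_le_n[OF mu, of "Suc (u!j)"] ge False by simp
          qed
          have "\<not> Suc (u!j) \<le> u!Suc j" using hat_galois[OF mu sj, of "Suc (u!j)"] ge False by simp
          moreover have "u!j \<le> u!Suc j" using mono_le[OF mu _ sj] by simp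
          ultimately have uj: "u!j = u!Suc j" by simp
          have ih: "s1!Suc j = s2!Suc j" using Suc.IH sj j(2) by simp
          show ?thesis using c1[OF sj uj] c2[OF sj uj] r1 r2 ih by simp
        qed
      qed
    qed
  qed
  show ?thesis
  proof (rule nth_equalityI)
    show "length s1 = length s2" using V1f(5) V2f(5) by simp
    fix j assume "j < length s1"
    then have "j < m" using V1f(5) lob_sel(1) by simp
    then show "s1!j = s2!j" using main[of m] by simp
  qed
qed

end

definition svl :: "('o,'m) zcat \<Rightarrow> ('o,'m) zob \<Rightarrow> ('o,'m) zob \<Rightarrow> nat list \<Rightarrow> nat \<Rightarrow> nat list \<Rightarrow> ('o,'m) zar list \<Rightarrow> ('o,'m) zar list \<Rightarrow> ('o,'m) zar list" where
  "svl D X Y \<phi> m u hr hs = map (\<lambda>j. if inim \<phi> j then hs ! hat \<phi> j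
      else if hat \<phi> j < zlen X \<and> u!(\<phi>!hat \<phi> j) = u!j then Cmp D (hs!hat \<phi> j) (zfwd X ! hat \<phi> j)
      else Cmp D (zbwd Y ! (u!j)) (hr ! Suc (u!j))) [0..<m]"

context zz begin

lemma lift_ex:
  assumes X: "is_zig D X" and sm: "smono \<phi> (zlen X) m" and mu: "mono_map m (zlen Y) u"
    and H: "zmapL D X Y (map (\<lambda>j. u!j) \<phi>) hr hs"
  shows "zmapL D (lob D X \<phi> m) Y u hr (svl D X Y \<phi> m u hr hs)"
proof -
  interpret smono \<phi> "zlen X" m by fact
  let ?X' = "lob D X \<phi> m" and ?n = "zlen X" and ?m' = "zlen Y"
  let ?\<psi> = "map (\<lambda>j. u!j) \<phi>"
  let ?sv = "svl D X Y \<phi> m u hr hs"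
  note Hf = zmapL_facts[OF H]
  have ha: "\<And>j. j < ?n \<Longrightarrow> hat ?\<psi> (?\<psi>!j) = j \<Longrightarrow> Cmp D (hs!j) (zfwd X!j) = Cmp D (zfwd Y!(?\<psi>!j)) (hr!(?\<psi>!j))"
   and hb: "\<And>j. j < ?n \<Longrightarrow> hat ?\<psi> (Suc (?\<psi>!j)) = Suc j \<Longrightarrow> Cmp D (hs!j) (zbwd X!j) = Cmp D (zbwd Y!(?\<psi>!j)) (hr!Suc (?\<psi>!j))"
   and hc: "\<And>j. Suc j < ?n \<Longrightarrow> ?\<psi>!j = ?\<psi>!Suc j \<Longrightarrow> Cmp D (hs!j) (zbwd X!j) = Cmp D (hs!Suc j) (zfwd X!Suc j)"
   and hd: "\<And>i. i < ?m' \<Longrightarrow> hat ?\<psi> i = hat ?\<psi> (Suc i) \<Longrightarrow> Cmp D (zfwd Y!i) (hr!i) = Cmp D (zbwd Y!i) (hr!Suc i)"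
    using H unfolding zmapL_def by auto
  have \<psi>n: "\<And>k. k < ?n \<Longrightarrow> ?\<psi>!k = u!(\<phi>!k)" using len by simp
  have hat\<psi>: "\<And>i. hat ?\<psi> i = hat \<phi> (hat u i)" using hat_comp[OF mm mu] .
  have \<phi>lt: "\<And>k. k < ?n \<Longrightarrow> \<phi>!k < m" using mono_lt[OF mm] .
  have ult: "\<And>j. j < m \<Longrightarrow> u!j < ?m'" using mono_lt[OF mu] .
  have hxf: "\<And>i. i < ?n \<Longrightarrow> hm D (zregs X!i) (zsings X!i) (zfwd X!i)" using zig_D(8)[OF X] .
  have hxb: "\<And>i. i < ?n \<Longrightarrow> hm D (zregs X!Suc i) (zsings X!i) (zbwd X!i)" using zig_D(9)[OF X] .
  have zY: "is_zig D Y" using Hf(2) .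
  have hyf: "\<And>i. i < ?m' \<Longrightarrow> hm D (zregs Y!i) (zsings Y!i) (zfwd Y!i)" using zig_D(8)[OF zY] .
  have hyb: "\<And>i. i < ?m' \<Longrightarrow> hm D (zregs Y!Suc i) (zsings Y!i) (zbwd Y!i)" using zig_D(9)[OF zY] .
  have hhr: "\<And>i. i \<le> ?m' \<Longrightarrow> hm D (zregs X ! hat \<phi> (hat u i)) (zregs Y ! i) (hr ! i)"
    using Hf(6) hat\<psi> by simp
  have hhs: "\<And>k. k < ?n \<Longrightarrow> hm D (zsings X ! k) (zsings Y ! (u!(\<phi>!k))) (hs ! k)"
    using Hf(7) \<psi>n by simp
  have svn: "\<And>j. j < m \<Longrightarrow> ?sv ! j = (if inim \<phi> j then hs ! hat \<phi> j
      else if hat \<phi> j < ?n \<and> u!(\<phi>!hat \<phi> j) = u!j then Cmp D (hs!hat \<phi> j) (zfwd X ! hat \<phi> j)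
      else Cmp D (zbwd Y ! (u!j)) (hr ! Suc (u!j)))"
    unfolding svl_def by simp
  have K: "\<And>j. j < m \<Longrightarrow> \<not> inim \<phi> j \<Longrightarrow> \<not> (hat \<phi> j < ?n \<and> u!(\<phi>!hat \<phi> j) = u!j) \<Longrightarrow>
      hat \<phi> (hat u (Suc (u!j))) = hat \<phi> j"
  proof -
    fix j assume j: "j < m" and ni: "\<not> inim \<phi> j" and nc: "\<not> (hat \<phi> j < ?n \<and> u!(\<phi>!hat \<phi> j) = u!j)"
    have "hat ?\<psi> (Suc (u!j)) = hat \<phi> j"
    proof (rule hat_eqI[OF mono_comp[OF mm mu]])
      show "hat \<phi> j \<le> ?n" using hat_le_n[OF mm] .
      fix k assume k: "k < ?n"
      have pk: "\<phi>!k \<noteq> j" using ni inim_iff k by auto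
      have g: "(hat \<phi> j \<le> k) = (j \<le> \<phi>!k)" using hat_galois[OF mm k] .
      show "(hat \<phi> j \<le> k) = (Suc (u ! j) \<le> ?\<psi> ! k)"
      proof
        assume a: "hat \<phi> j \<le> k"
        let ?k0 = "hat \<phi> j"
        have k0: "?k0 < ?n" using a k by simp
        have "j \<le> \<phi>!?k0" using hat_galois[OF mm k0, of j] by simp
        moreover have "\<phi>!?k0 \<noteq> j" using ni inim_iff k0 by auto
        ultimately have "j < \<phi>!?k0" by simp
        then have "u!j \<le> u!(\<phi>!?k0)" using mono_le[OF mu _ \<phi>lt[OF k0]] by simp
        moreover have "u!(\<phi>!?k0) \<noteq> u!j" using nc k0 by simp
        moreover have "u!(\<phi>!?k0) \<le> u!(\<phi>!k)" using mono_le[OF mu mono_le[OF mm a k] \<phi>lt[OF k]] .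
        ultimately show "Suc (u ! j) \<le> ?\<psi> ! k" using \<psi>n[OF k] by simp
      next
        assume a: "Suc (u ! j) \<le> ?\<psi> ! k"
        show "hat \<phi> j \<le> k"
        proof (rule ccontr)
          assume "\<not> hat \<phi> j \<le> k"
          then have "\<phi>!k \<le> j" using g by simp
          then have "u!(\<phi>!k) \<le> u!j" using mono_le[OF mu _ j] by simp
          then show False using a \<psi>n[OF k] by simp
        qed
      qed
    qed
    then show "hat \<phi> (hat u (Suc (u!j))) = hat \<phi> j" using hat\<psi> by simp
  qed
  have hsv: "\<And>j. j < m \<Longrightarrow> hm D (zsings ?X' ! j) (zsings Y ! (u ! j)) (?sv ! j)"
  proof -
    fix j assume j: "j < m"
    let ?k = "hat \<phi> j"
    show "hm D (zsings ?X' ! j) (zsings Y ! (u ! j)) (?sv ! j)"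
    proof (cases "inim \<phi> j")
      case True
      then show ?thesis using svn[OF j] lob_sel(3)[OF j] hhs[OF inim_lt[OF True]] inim_eq[OF True] by simp
    next
      case ni: False
      show ?thesis
      proof (cases "?k < ?n \<and> u!(\<phi>!?k) = u!j")
        case True
        then show ?thesis using svn[OF j] lob_sel(3)[OF j] ni hm_comp[OF hxf hhs, of ?k] by simp
      next
        case False
        have "hm D (zregs X ! ?k) (zsings Y ! (u!j)) (Cmp D (zbwd Y ! (u!j)) (hr ! Suc (u!j)))"
          using hm_comp[OF hhr[of "Suc (u!j)"] hyb[OF ult[OF j]]] ult[OF j] K[OF j ni False] by simp
        then show ?thesis using svn[OF j] lob_sel(3)[OF j] ni False by simp
      qed
    qed
  qed
  show ?thesis unfolding zmapL_def lob_sel(1)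
  proof (intro conjI allI impI)
    show "is_zig D ?X'" by (rule lob_zig[OF X sm])
    show "is_zig D Y" by fact
    show "mono_map m ?m' u" by fact
    show "length hr = Suc ?m'" using Hf(4) .
    show "length ?sv = m" unfolding svl_def by simp
  next
    fix i assume i: "i \<le> ?m'"
    show "hm D (zregs ?X' ! hat u i) (zregs Y ! i) (hr ! i)"
      using hhr[OF i] lob_sel(2)[OF hat_le_n[OF mu]] by simp
  next
    fix j assume j: "j < m"
    show "hm D (zsings ?X' ! j) (zsings Y ! (u ! j)) (?sv ! j)" using hsv[OF j] .
  next
    fix j assume j: "j < m" and hj: "hat u (u!j) = j"
    let ?k = "hat \<phi> j"
    show "Cmp D (?sv ! j) (zfwd ?X' ! j) = Cmp D (zfwd Y ! (u ! j)) (hr ! (u ! j))"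
    proof (cases "inim \<phi> j")
      case True
      have k: "?k < ?n" using inim_lt[OF True] .
      have pk: "\<phi>!?k = j" using inim_eq[OF True] .
      have "hat ?\<psi> (?\<psi>!?k) = ?k" using hat\<psi> \<psi>n[OF k] pk hj by simp
      then show ?thesis using ha[OF k] svn[OF j] lob_sel(4)[OF j] True \<psi>n[OF k] pk by simp
    next
      case ni: False
      have r: "Cmp D (?sv ! j) (zfwd ?X' ! j) = ?sv ! j"
        using id_r[OF hsv[OF j]] lob_sel(3,4)[OF j] ni by simp
      show ?thesis
      proof (cases "?k < ?n \<and> u!(\<phi>!?k) = u!j")
        case True
        have k: "?k < ?n" using True by simp
        have "hat ?\<psi> (?\<psi>!?k) = ?k" using hat\<psi> \<psi>n[OF k] True hj by simp
        then show ?thesis using r ha[OF k] svn[OF j] ni True \<psi>n[OF k] by simp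
      next
        case False
        have "hat ?\<psi> (u!j) = hat ?\<psi> (Suc (u!j))" using hat\<psi> hj K[OF j ni False] by simp
        then show ?thesis using r svn[OF j] ni False hd[OF ult[OF j]] by simp
      qed
    qed
  next
    fix j assume j: "j < m" and hj: "hat u (Suc (u!j)) = Suc j"
    let ?k = "hat \<phi> j"
    show "Cmp D (?sv ! j) (zbwd ?X' ! j) = Cmp D (zbwd Y ! (u ! j)) (hr ! Suc (u ! j))"
    proof (cases "inim \<phi> j")
      case True
      have k: "?k < ?n" using inim_lt[OF True] .
      have pk: "\<phi>!?k = j" using inim_eq[OF True] .
      have "hat ?\<psi> (Suc (?\<psi>!?k)) = Suc ?k" using hat\<psi> \<psi>n[OF k] pk hj inim_hat_Suc[OF True] by simp
      then show ?thesis using hb[OF k] svn[OF j] lob_sel(5)[OF j] True \<psi>n[OF k] pk by simp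
    next
      case ni: False
      have r: "Cmp D (?sv ! j) (zbwd ?X' ! j) = ?sv ! j"
        using id_r[OF hsv[OF j]] lob_sel(3,5)[OF j] ni by simp
      have nc: "\<not> (?k < ?n \<and> u!(\<phi>!?k) = u!j)"
      proof
        assume a: "?k < ?n \<and> u!(\<phi>!?k) = u!j"
        have "j \<le> \<phi>!?k" using hat_galois[OF mm, of ?k j] a by simp
        moreover have "\<phi>!?k \<noteq> j" using ni inim_iff a by auto
        ultimately have sj: "Suc j \<le> \<phi>!?k" by simp
        have sjm: "Suc j < m" using sj \<phi>lt a by (meson order.strict_trans1)
        have "u!Suc j \<le> u!j" using mono_le[OF mu sj \<phi>lt] a by simp
        then have "\<not> hat u (Suc (u!j)) \<le> Suc j" using hat_galois[OF mu sjm] by simp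
        then show False using hj by simp
      qed
      show ?thesis using r svn[OF j] ni nc by simp
    qed
  next
    fix j assume sj: "Suc j < m" and uj: "u!j = u!Suc j"
    have j: "j < m" using sj by simp
    let ?k = "hat \<phi> j" and ?k1 = "hat \<phi> (Suc j)"
    show "Cmp D (?sv ! j) (zbwd ?X' ! j) = Cmp D (?sv ! Suc j) (zfwd ?X' ! Suc j)"
    proof (cases "inim \<phi> j")
      case ij: True
      have k: "?k < ?n" using inim_lt[OF ij] .
      have pk: "\<phi>!?k = j" using inim_eq[OF ij] .
      have k1: "?k1 = Suc ?k" using inim_hat_Suc[OF ij] .
      have L: "Cmp D (?sv ! j) (zbwd ?X' ! j) = Cmp D (hs!?k) (zbwd X!?k)"
        using svn[OF j] lob_sel(5)[OF j] ij by simp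
      show ?thesis
      proof (cases "inim \<phi> (Suc j)")
        case ij1: True
        have k1n: "Suc ?k < ?n" using inim_lt[OF ij1] k1 by simp
        have pk1: "\<phi>!Suc ?k = Suc j" using inim_eq[OF ij1] k1 by simp
        have "?\<psi>!?k = ?\<psi>!Suc ?k" using \<psi>n[OF k] \<psi>n[OF k1n] pk pk1 uj by simp
        then show ?thesis using L hc[OF k1n] svn[OF sj] lob_sel(4)[OF sj] ij1 k1 by simp
      next
        case ni1: False
        have r: "Cmp D (?sv ! Suc j) (zfwd ?X' ! Suc j) = ?sv ! Suc j"
          using id_r[OF hsv[OF sj]] lob_sel(3,4)[OF sj] ni1 by simp
        show ?thesis
        proof (cases "?k1 < ?n \<and> u!(\<phi>!?k1) = u!Suc j")
          case True
          have k1n: "Suc ?k < ?n" using True k1 by simp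
          have "?\<psi>!?k = ?\<psi>!Suc ?k" using \<psi>n[OF k] \<psi>n[OF k1n] pk True uj k1 by simp
          then show ?thesis using L r hc[OF k1n] svn[OF sj] ni1 True k1 by simp
        next
          case False
          have "hat ?\<psi> (Suc (?\<psi>!?k)) = Suc ?k" using hat\<psi> \<psi>n[OF k] pk uj K[OF sj ni1 False] k1 by simp
          then show ?thesis using L r hb[OF k] svn[OF sj] ni1 False \<psi>n[OF k] pk uj by simp
        qed
      qed
    next
      case ni: False
      have kk: "?k1 = ?k" using nonim_hat_Suc[OF ni] .
      have L: "Cmp D (?sv ! j) (zbwd ?X' ! j) = ?sv ! j"
        using id_r[OF hsv[OF j]] lob_sel(3,5)[OF j] ni by simp
      show ?thesis
      proof (cases "inim \<phi> (Suc j)")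
        case ij1: True
        have k: "?k < ?n" using inim_lt[OF ij1] kk by simp
        have pk1: "\<phi>!?k = Suc j" using inim_eq[OF ij1] kk by simp
        show ?thesis using L svn[OF j] svn[OF sj] ni ij1 k pk1 uj kk lob_sel(4)[OF sj] by simp
      next
        case ni1: False
        have r: "Cmp D (?sv ! Suc j) (zfwd ?X' ! Suc j) = ?sv ! Suc j"
          using id_r[OF hsv[OF sj]] lob_sel(3,4)[OF sj] ni1 by simp
        show ?thesis using L r svn[OF j] svn[OF sj] ni ni1 kk uj by simp
      qed
    qed
  next
    fix i assume i: "i < ?m'" and e: "hat u i = hat u (Suc i)"
    show "Cmp D (zfwd Y ! i) (hr ! i) = Cmp D (zbwd Y ! i) (hr ! Suc i)"
      using hd[OF i] hat\<psi> e by simp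
  qed
qed

lemma svl_phi:
  assumes sm: "smono \<phi> (zlen X) m"
  shows "map (\<lambda>k. svl D X Y \<phi> m u hr hs ! (\<phi>!k)) [0..<zlen X] = hs \<longleftrightarrow> length hs = zlen X"
proof -
  interpret smono \<phi> "zlen X" m by fact
  have "\<And>k. k < zlen X \<Longrightarrow> svl D X Y \<phi> m u hr hs ! (\<phi>!k) = hs ! k"
    unfolding svl_def using mono_lt[OF mm] inim_phi hat_phi by simp
  then show ?thesis
  proof (intro iffI)
    assume "map (\<lambda>k. svl D X Y \<phi> m u hr hs ! (\<phi>!k)) [0..<zlen X] = hs"
    from arg_cong[OF this, of length] show "length hs = zlen X" by simp
  qed (auto intro: nth_equalityI)
qed

end

context zz begin

lemma lar_cocart:
  assumes X: "is_zig D X" and sm: "smono \<phi> (zlen X) m"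
  shows "pi_cocartesian (Zcat D) (lar D X \<phi> m)"
  unfolding pi_cocartesian_def
proof (intro conjI ballI allI impI)
  interpret smono \<phi> "zlen X" m by fact
  let ?L = "lar D X \<phi> m" and ?X' = "lob D X \<phi> m"
  show "?L \<in> Ar (Zcat D)" using lar_zmap[OF X sm] by (simp add: Zcat_simps)
  fix h u assume hA: "h \<in> Ar (Zcat D)" and hd: "Dom (Zcat D) h = Dom (Zcat D) ?L"
    and uu: "mono_map (zlen (Cod (Zcat D) ?L)) (zlen (Cod (Zcat D) h)) u \<and> map (\<lambda>j. u ! j) (zfs ?L) = zfs h"
  have hz: "is_zmap D h" using hA by (simp add: Zcat_simps)
  note hD = zmap_D[OF hz]
  let ?Y = "ztgt h" and ?hr = "zrsl h" and ?hs = "zssl h"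
  have sx: "zsrc h = X" using hd by (simp add: Zcat_simps lar_def)
  have mu: "mono_map m (zlen ?Y) u" using uu by (simp add: Zcat_simps lar_def lob_sel(1))
  have fh: "zfs h = map (\<lambda>j. u!j) \<phi>" using uu by (simp add: lar_def)
  have H: "zmapL D X ?Y (map (\<lambda>j. u!j) \<phi>) ?hr ?hs" using hD sx fh by simp
  have he: "h = AZig X ?Y (map (\<lambda>j. u!j) \<phi>) ?hr ?hs" using hD sx fh by simp
  have lhs: "length ?hs = zlen X" using zmapL_facts(5)[OF H] .
  let ?sv = "svl D X Y \<phi> m u ?hr ?hs"
  define v0 where "v0 = AZig ?X' ?Y u ?hr (svl D X ?Y \<phi> m u ?hr ?hs)"
  have V0: "zmapL D ?X' ?Y u ?hr (svl D X ?Y \<phi> m u ?hr ?hs)" by (rule lift_ex[OF X sm mu H])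
  have mp: "map (\<lambda>k. svl D X ?Y \<phi> m u ?hr ?hs ! (\<phi>!k)) [0..<zlen X] = ?hs"
    using svl_phi[OF sm, of ?Y u ?hr ?hs] lhs by simp
  have c0: "Cmp (Zcat D) v0 ?L = h"
    unfolding v0_def lift_comp_eq[OF X sm V0] mp using he[symmetric] .
  show "\<exists>!v. v \<in> Ar (Zcat D) \<and> Dom (Zcat D) v = Cod (Zcat D) ?L \<and> Cod (Zcat D) v = Cod (Zcat D) h \<and>
            Cmp (Zcat D) v ?L = h \<and> zfs v = u"
  proof (rule ex1I[of _ v0])
    show "v0 \<in> Ar (Zcat D) \<and> Dom (Zcat D) v0 = Cod (Zcat D) ?L \<and> Cod (Zcat D) v0 = Cod (Zcat D) h \<and>
            Cmp (Zcat D) v0 ?L = h \<and> zfs v0 = u"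
      using V0 c0 unfolding v0_def by (simp add: Zcat_simps zmap_iff lar_def del: Zcat_simps(5))
  next
    fix v assume a: "v \<in> Ar (Zcat D) \<and> Dom (Zcat D) v = Cod (Zcat D) ?L \<and> Cod (Zcat D) v = Cod (Zcat D) h \<and>
            Cmp (Zcat D) v ?L = h \<and> zfs v = u"
    have vz: "is_zmap D v" using a by (simp add: Zcat_simps)
    note vD = zmap_D[OF vz]
    have vs: "zsrc v = ?X'" "ztgt v = ?Y" "zfs v = u" using a by (simp_all add: Zcat_simps lar_def)
    have V: "zmapL D ?X' ?Y u (zrsl v) (zssl v)" using vD vs by simp
    have ve: "v = AZig ?X' ?Y u (zrsl v) (zssl v)" using vD vs by simp
    have cv: "Cmp (Zcat D) v ?L = h" using a by simp
    have eqs: "zrsl v = ?hr" "map (\<lambda>k. zssl v ! (\<phi>!k)) [0..<zlen X] = ?hs"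
      using cv lift_comp_eq[OF X sm V] ve he by (metis zar.inject(2))+
    have V': "zmapL D ?X' ?Y u ?hr (zssl v)" using V eqs(1) by simp
    have "zssl v = svl D X ?Y \<phi> m u ?hr ?hs"
    proof (rule lift_uniq[OF X sm V' V0])
      fix k assume k: "k < zlen X"
      have "zssl v ! (\<phi>!k) = ?hs ! k" using arg_cong[OF eqs(2), of "\<lambda>l. l ! k"] k by simp
      moreover have "svl D X ?Y \<phi> m u ?hr ?hs ! (\<phi>!k) = ?hs ! k"
        unfolding svl_def using mono_lt[OF mm k] inim_phi[OF k] hat_phi[OF k] by simp
      ultimately show "zssl v ! (\<phi>!k) = svl D X ?Y \<phi> m u ?hr ?hs ! (\<phi>!k)" by simp
    qed
    then show "v = v0" unfolding v0_def using ve eqs(1) by simp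
  qed
qed

end

context zc begin

lemma iso_comp: "is_iso D f \<Longrightarrow> is_iso D g \<Longrightarrow> Cod D f = Dom D g \<Longrightarrow> is_iso D (Cmp D g f)"
proof -
  assume f: "is_iso D f" and g: "is_iso D g" and fg: "Cod D f = Dom D g"
  obtain f' where f': "f' \<in> Ar D" "Dom D f' = Cod D f" "Cod D f' = Dom D f"
     "Cmp D f' f = Idt D (Dom D f)" "Cmp D f f' = Idt D (Cod D f)" using f unfolding is_iso_def by blast
  obtain g' where g': "g' \<in> Ar D" "Dom D g' = Cod D g" "Cod D g' = Dom D g"
     "Cmp D g' g = Idt D (Dom D g)" "Cmp D g g' = Idt D (Cod D g)" using g unfolding is_iso_def by blast
  have hf: "hm D (Dom D f) (Cod D f) f" using f unfolding is_iso_def hm_def by simp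
  have hg: "hm D (Cod D f) (Cod D g) g" using g fg unfolding is_iso_def hm_def by simp
  have hf': "hm D (Cod D f) (Dom D f) f'" using f' unfolding hm_def by simp
  have hg': "hm D (Cod D g) (Cod D f) g'" using g' fg unfolding hm_def by simp
  have c: "hm D (Dom D f) (Cod D g) (Cmp D g f)" using hm_comp[OF hf hg] .
  have c': "hm D (Cod D g) (Dom D f) (Cmp D f' g')" using hm_comp[OF hg' hf'] .
  have e1: "Cmp D (Cmp D f' g') (Cmp D g f) = Idt D (Dom D f)"
  proof -
    have "Cmp D (Cmp D f' g') (Cmp D g f) = Cmp D f' (Cmp D g' (Cmp D g f))"
      using hm_assoc[OF c hg' hf'] by simp
    also have "Cmp D g' (Cmp D g f) = Cmp D (Cmp D g' g) f" using hm_assoc[OF hf hg hg'] .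
    also have "\<dots> = f" using g'(4) fg id_l[OF hf] by simp
    finally show ?thesis using f'(4) by simp
  qed
  have e2: "Cmp D (Cmp D g f) (Cmp D f' g') = Idt D (Cod D g)"
  proof -
    have "Cmp D (Cmp D g f) (Cmp D f' g') = Cmp D g (Cmp D f (Cmp D f' g'))"
      using hm_assoc[OF c' hf hg] by simp
    also have "Cmp D f (Cmp D f' g') = Cmp D (Cmp D f f') g'" using hm_assoc[OF hg' hf' hf] .
    also have "\<dots> = g'" using f'(5) id_l[OF hg'] by simp
    finally show ?thesis using g'(5) by simp
  qed
  show ?thesis unfolding is_iso_def using c c' e1 e2 unfolding hm_def by auto
qed

lemma iso_id: "a \<in> Ob D \<Longrightarrow> is_iso D (Idt D a)"
  unfolding is_iso_def using hm_id[of a] id_l[OF hm_id[of a]] unfolding hm_def by auto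

end

context zz begin

interpretation E: zc "Zcat D" by (unfold_locales) (rule Zcat_cat)

lemma ar_E: "f \<in> Ar (Zcat D) \<longleftrightarrow> is_zmap D f" by (simp add: Zcat_simps)

lemma hmE: "hm (Zcat D) a b f \<longleftrightarrow> is_zmap D f \<and> zsrc f = a \<and> ztgt f = b"
  by (simp add: hm_def Zcat_simps)

lemma zfs_cmp: "zfs (Cmp (Zcat D) g f) = map (\<lambda>j. zfs g ! j) (zfs f)" by (simp add: Zcat_simps)
lemma zfs_id: "zfs (Idt (Zcat D) X) = [0..<zlen X]" by (simp add: Zcat_simps)

lemma zmap_mono: "is_zmap D f \<Longrightarrow> mono_map (zlen (zsrc f)) (zlen (ztgt f)) (zfs f)"
  using zmapL_facts(3)[OF conjunct2[OF zmap_D]] by blast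

lemma cocart_ex:
  assumes "pi_cocartesian (Zcat D) f" "is_zmap D h" "zsrc h = zsrc f"
    "mono_map (zlen (ztgt f)) (zlen (ztgt h)) u" "map (\<lambda>j. u!j) (zfs f) = zfs h"
  shows "\<exists>v. hm (Zcat D) (ztgt f) (ztgt h) v \<and> Cmp (Zcat D) v f = h \<and> zfs v = u"
proof -
  have "\<exists>!v. v \<in> Ar (Zcat D) \<and> Dom (Zcat D) v = Cod (Zcat D) f \<and> Cod (Zcat D) v = Cod (Zcat D) h \<and>
                 Cmp (Zcat D) v f = h \<and> zfs v = u"
    using assms unfolding pi_cocartesian_def by (simp add: Zcat_simps del: Zcat_simps(5))
  then show ?thesis unfolding hm_def by (auto simp: Zcat_simps simp del: Zcat_simps(5))
qed

lemma cocart_uniq: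
  assumes "pi_cocartesian (Zcat D) f" "is_zmap D h" "zsrc h = zsrc f"
    "mono_map (zlen (ztgt f)) (zlen (ztgt h)) u" "map (\<lambda>j. u!j) (zfs f) = zfs h"
    "hm (Zcat D) (ztgt f) (ztgt h) v1" "Cmp (Zcat D) v1 f = h" "zfs v1 = u"
    "hm (Zcat D) (ztgt f) (ztgt h) v2" "Cmp (Zcat D) v2 f = h" "zfs v2 = u"
  shows "v1 = v2"
proof -
  have "\<exists>!v. v \<in> Ar (Zcat D) \<and> Dom (Zcat D) v = Cod (Zcat D) f \<and> Cod (Zcat D) v = Cod (Zcat D) h \<and>
                 Cmp (Zcat D) v f = h \<and> zfs v = u"
    using assms(1-5) unfolding pi_cocartesian_def by (simp add: Zcat_simps del: Zcat_simps(5))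
  then show ?thesis using assms(6-11) unfolding hm_def by (auto simp: Zcat_simps simp del: Zcat_simps(5))
qed

lemma cocart_ar: "pi_cocartesian (Zcat D) f \<Longrightarrow> is_zmap D f"
  unfolding pi_cocartesian_def by (simp add: Zcat_simps)

lemma map_nth_id: "mono_map n m fs \<Longrightarrow> map (\<lambda>j. [0..<m] ! j) fs = fs"
  by (rule nth_equalityI) (use mono_lt[of n m fs] mono_len[of n m fs] in auto)

lemma cocart_id:
  assumes X: "is_zig D X"
  shows "pi_cocartesian (Zcat D) (Idt (Zcat D) X)"
  unfolding pi_cocartesian_def
proof (intro conjI ballI allI impI)
  show "Idt (Zcat D) X \<in> Ar (Zcat D)" using zid_zmap[OF X] by (simp add: Zcat_simps del: Zcat_simps(6))
  fix h u assume h: "h \<in> Ar (Zcat D)" "Dom (Zcat D) h = Dom (Zcat D) (Idt (Zcat D) X)"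
    and u: "mono_map (zlen (Cod (Zcat D) (Idt (Zcat D) X))) (zlen (Cod (Zcat D) h)) u \<and>
       map (\<lambda>j. u ! j) (zfs (Idt (Zcat D) X)) = zfs h"
  have hz: "is_zmap D h" "zsrc h = X" using h by (simp_all add: Zcat_simps)
  have ul: "length u = zlen X" using u mono_len[of "zlen X" _ u] by (auto simp: Zcat_simps)
  have uh: "u = zfs h" using u ul map_nth[of u] by (simp add: Zcat_simps)
  show "\<exists>!v. v \<in> Ar (Zcat D) \<and> Dom (Zcat D) v = Cod (Zcat D) (Idt (Zcat D) X) \<and> Cod (Zcat D) v = Cod (Zcat D) h \<and>
            Cmp (Zcat D) v (Idt (Zcat D) X) = h \<and> zfs v = u"
  proof (rule ex1I[of _ h])
    show "h \<in> Ar (Zcat D) \<and> Dom (Zcat D) h = Cod (Zcat D) (Idt (Zcat D) X) \<and> Cod (Zcat D) h = Cod (Zcat D) h \<and>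
            Cmp (Zcat D) h (Idt (Zcat D) X) = h \<and> zfs h = u"
      using h(1) hz zid_right[OF hz(1)] uh by (simp add: Zcat_simps(1-4,6))
  next
    fix v assume "v \<in> Ar (Zcat D) \<and> Dom (Zcat D) v = Cod (Zcat D) (Idt (Zcat D) X) \<and> Cod (Zcat D) v = Cod (Zcat D) h \<and>
            Cmp (Zcat D) v (Idt (Zcat D) X) = h \<and> zfs v = u"
    then show "v = h" using zid_right[of v] by (simp add: Zcat_simps(1-4,6) del: Zcat_simps(5))
  qed
qed

end

context zz begin

interpretation E: zc "Zcat D" by (unfold_locales) (rule Zcat_cat)

lemma hm_zmap: "is_zmap D f \<Longrightarrow> hm (Zcat D) (zsrc f) (ztgt f) f" by (simp add: hmE)

lemma cocart_comp:
  assumes f: "pi_cocartesian (Zcat D) f" and g: "pi_cocartesian (Zcat D) g" and fg: "ztgt f = zsrc g"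
  shows "pi_cocartesian (Zcat D) (Cmp (Zcat D) g f)"
  unfolding pi_cocartesian_def
proof (intro conjI ballI allI impI)
  have fz: "is_zmap D f" and gz: "is_zmap D g" using cocart_ar f g by auto
  have hf: "hm (Zcat D) (zsrc f) (ztgt f) f" and hg: "hm (Zcat D) (ztgt f) (ztgt g) g"
    using hm_zmap[OF fz] hm_zmap[OF gz] fg by auto
  have hgf: "hm (Zcat D) (zsrc f) (ztgt g) (Cmp (Zcat D) g f)" using E.hm_comp[OF hf hg] .
  show "Cmp (Zcat D) g f \<in> Ar (Zcat D)" using hgf unfolding hm_def by simp
  fix h u assume hA: "h \<in> Ar (Zcat D)" and hd: "Dom (Zcat D) h = Dom (Zcat D) (Cmp (Zcat D) g f)"
    and uu: "mono_map (zlen (Cod (Zcat D) (Cmp (Zcat D) g f))) (zlen (Cod (Zcat D) h)) u \<and>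
        map (\<lambda>j. u ! j) (zfs (Cmp (Zcat D) g f)) = zfs h"
  have hz: "is_zmap D h" using hA by (simp add: Zcat_simps)
  have hs: "zsrc h = zsrc f" using hd by (simp add: Zcat_simps)
  have mu: "mono_map (zlen (ztgt g)) (zlen (ztgt h)) u" using uu by (simp add: Zcat_simps)
  have mf: "mono_map (zlen (zsrc f)) (zlen (ztgt f)) (zfs f)" using zmap_mono[OF fz] .
  have mg: "mono_map (zlen (ztgt f)) (zlen (ztgt g)) (zfs g)" using zmap_mono[OF gz] fg by simp
  have uh: "map (\<lambda>j. u ! j) (map (\<lambda>j. zfs g ! j) (zfs f)) = zfs h" using uu by (simp add: zfs_cmp)
  let ?w = "map (\<lambda>j. u!j) (zfs g)"
  have mw: "mono_map (zlen (ztgt f)) (zlen (ztgt h)) ?w" using mono_comp[OF mg mu] .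
  have "map (\<lambda>j. ?w ! j) (zfs f) = map (\<lambda>j. u ! j) (map (\<lambda>j. zfs g ! j) (zfs f))"
    by (rule nth_equalityI) (use mono_lt[OF mf] mono_len[OF mf] mono_len[OF mg] in auto)
  then have wh: "map (\<lambda>j. ?w ! j) (zfs f) = zfs h" using uh by (rule trans)
  obtain w where w: "hm (Zcat D) (ztgt f) (ztgt h) w" "Cmp (Zcat D) w f = h" "zfs w = ?w"
    using cocart_ex[OF f hz hs mw wh] by blast
  have wz: "is_zmap D w" "zsrc w = zsrc g" "ztgt w = ztgt h" using w(1) fg by (auto simp: hmE)
  obtain v where v: "hm (Zcat D) (ztgt g) (ztgt h) v" "Cmp (Zcat D) v g = w" "zfs v = u"
    using cocart_ex[OF g wz(1) wz(2) mu[folded wz(3)] w(3)[symmetric]] wz(3) by auto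
  have vgf: "Cmp (Zcat D) v (Cmp (Zcat D) g f) = h"
    using E.hm_assoc[OF hf hg v(1)] v(2) w(2) by simp
  show "\<exists>!v. v \<in> Ar (Zcat D) \<and> Dom (Zcat D) v = Cod (Zcat D) (Cmp (Zcat D) g f) \<and>
            Cod (Zcat D) v = Cod (Zcat D) h \<and> Cmp (Zcat D) v (Cmp (Zcat D) g f) = h \<and> zfs v = u"
  proof (rule ex1I[of _ v])
    show "v \<in> Ar (Zcat D) \<and> Dom (Zcat D) v = Cod (Zcat D) (Cmp (Zcat D) g f) \<and>
            Cod (Zcat D) v = Cod (Zcat D) h \<and> Cmp (Zcat D) v (Cmp (Zcat D) g f) = h \<and> zfs v = u"
      using v(1,3) vgf hgf unfolding hm_def by (simp add: Zcat_simps(3,4))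
  next
    fix v' assume a: "v' \<in> Ar (Zcat D) \<and> Dom (Zcat D) v' = Cod (Zcat D) (Cmp (Zcat D) g f) \<and>
            Cod (Zcat D) v' = Cod (Zcat D) h \<and> Cmp (Zcat D) v' (Cmp (Zcat D) g f) = h \<and> zfs v' = u"
    have hv': "hm (Zcat D) (ztgt g) (ztgt h) v'" using a hgf unfolding hm_def by (simp add: Zcat_simps)
    have hv'g: "hm (Zcat D) (ztgt f) (ztgt h) (Cmp (Zcat D) v' g)" using E.hm_comp[OF hg hv'] .
    have e1: "Cmp (Zcat D) (Cmp (Zcat D) v' g) f = h" using E.hm_assoc[OF hf hg hv'] a by simp
    have e2: "zfs (Cmp (Zcat D) v' g) = ?w" using a by (simp add: zfs_cmp)
    have "Cmp (Zcat D) v' g = w"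
      using cocart_uniq[OF f hz hs mw wh hv'g e1 e2 w(1) w(2) w(3)] .
    then show "v' = v"
      using cocart_uniq[OF g wz(1) wz(2) mu[folded wz(3)] w(3)[symmetric], of v' v] hv' v a wz(3) by simp
  qed
qed

lemma strict_ge:
  assumes "mono_map n m a" "\<And>i j. i < n \<Longrightarrow> j < n \<Longrightarrow> a!i = a!j \<Longrightarrow> i = j"
  shows "j < n \<Longrightarrow> j \<le> a!j"
proof (induction j)
  case 0 then show ?case by simp
next
  case (Suc j)
  have "a!j \<le> a!Suc j" using mono_le[OF assms(1), of j "Suc j"] Suc by simp
  moreover have "a!j \<noteq> a!Suc j" using assms(2)[of j "Suc j"] Suc by auto
  ultimately show ?case using Suc by simp
qed

lemma iso_vert:
  assumes "is_iso (Zcat D) t"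
  shows "zlen (zsrc t) = zlen (ztgt t) \<and> zfs t = [0..<zlen (zsrc t)] \<and>
     (\<forall>x\<in>set (zrsl t). is_iso D x) \<and> (\<forall>x\<in>set (zssl t). is_iso D x)"
proof -
  obtain t' where t': "t' \<in> Ar (Zcat D)" "Dom (Zcat D) t' = Cod (Zcat D) t" "Cod (Zcat D) t' = Dom (Zcat D) t"
     "Cmp (Zcat D) t' t = Idt (Zcat D) (Dom (Zcat D) t)" "Cmp (Zcat D) t t' = Idt (Zcat D) (Cod (Zcat D) t)"
    using assms unfolding is_iso_def by blast
  have tz: "is_zmap D t" using assms unfolding is_iso_def by (simp add: Zcat_simps)
  have t'z: "is_zmap D t'" using t' by (simp add: Zcat_simps)
  let ?X = "zsrc t" and ?Y = "ztgt t"
  have st': "zsrc t' = ?Y" "ztgt t' = ?X" using t' by (simp_all add: Zcat_simps)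
  have e1: "Cmp (Zcat D) t' t = Idt (Zcat D) ?X" and e2: "Cmp (Zcat D) t t' = Idt (Zcat D) ?Y"
    using t' by (simp_all add: Zcat_simps(3,4))
  let ?n = "zlen ?X" and ?m = "zlen ?Y"
  let ?a = "zfs t" and ?b = "zfs t'"
  have ma: "mono_map ?n ?m ?a" using zmap_mono[OF tz] .
  have mb: "mono_map ?m ?n ?b" using zmap_mono[OF t'z] st' by simp
  have ba: "map (\<lambda>j. ?b ! j) ?a = [0..<?n]" using arg_cong[OF e1, of zfs] by (simp add: zfs_cmp zfs_id)
  have ab: "map (\<lambda>j. ?a ! j) ?b = [0..<?m]" using arg_cong[OF e2, of zfs] by (simp add: zfs_cmp zfs_id)
  have ba': "\<And>j. j < ?n \<Longrightarrow> ?b ! (?a ! j) = j"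
    using arg_cong[OF ba, of "\<lambda>l. l ! j" for j] mono_len[OF ma] by (metis length_map nth_map nth_upt add_0)
  have ab': "\<And>j. j < ?m \<Longrightarrow> ?a ! (?b ! j) = j"
    using arg_cong[OF ab, of "\<lambda>l. l ! j" for j] mono_len[OF mb] by (metis length_map nth_map nth_upt add_0)
  have ai: "\<And>i j. i < ?n \<Longrightarrow> j < ?n \<Longrightarrow> ?a!i = ?a!j \<Longrightarrow> i = j" using ba' by metis
  have bi: "\<And>i j. i < ?m \<Longrightarrow> j < ?m \<Longrightarrow> ?b!i = ?b!j \<Longrightarrow> i = j" using ab' by metis
  have ga: "\<And>j. j < ?n \<Longrightarrow> j \<le> ?a!j" using strict_ge[OF ma ai] by blast
  have gb: "\<And>j. j < ?m \<Longrightarrow> j \<le> ?b!j" using strict_ge[OF mb bi] by blast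
  have aj: "\<And>j. j < ?n \<Longrightarrow> ?a!j = j"
  proof -
    fix j assume j: "j < ?n"
    have "?a!j < ?m" using mono_lt[OF ma j] .
    then have "?a!j \<le> ?b!(?a!j)" using gb by blast
    then show "?a!j = j" using ba'[OF j] ga[OF j] by simp
  qed
  have bj: "\<And>j. j < ?m \<Longrightarrow> ?b!j = j"
  proof -
    fix j assume j: "j < ?m"
    have "?b!j < ?n" using mono_lt[OF mb j] .
    then have "?b!j \<le> ?a!(?b!j)" using ga by blast
    then show "?b!j = j" using ab'[OF j] gb[OF j] by simp
  qed
  have nm: "?n = ?m"
  proof (rule antisym)
    show "?n \<le> ?m"
    proof (rule ccontr)
      assume "\<not> ?n \<le> ?m"
      then have "?m < ?n" by simp
      then have "?a!?m < ?m" using mono_lt[OF ma] by blast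
      then show False using aj \<open>?m < ?n\<close> by simp
    qed
    show "?m \<le> ?n"
    proof (rule ccontr)
      assume "\<not> ?m \<le> ?n"
      then have "?n < ?m" by simp
      then have "?b!?n < ?n" using mono_lt[OF mb] by blast
      then show False using bj \<open>?n < ?m\<close> by simp
    qed
  qed
  have aid: "?a = [0..<?n]" using aj mono_len[OF ma] by (auto intro: nth_equalityI)
  have bid: "?b = [0..<?n]" using bj mono_len[OF mb] nm by (auto intro: nth_equalityI)
  note tf = zmapL_facts[OF conjunct2[OF zmap_D[OF tz]]]
  note t'f = zmapL_facts[OF conjunct2[OF zmap_D[OF t'z]]]
  have rr: "\<And>i. i \<le> ?n \<Longrightarrow> Cmp D (zrsl t' ! i) (zrsl t ! i) = Idt D (zregs ?X ! i)"
  proof -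
    fix i assume i: "i \<le> ?n"
    have "zrsl (Cmp (Zcat D) t' t) ! i = zrsl (Idt (Zcat D) ?X) ! i" using e1 by simp
    then show "Cmp D (zrsl t' ! i) (zrsl t ! i) = Idt D (zregs ?X ! i)"
      using i st' bid hat_id[OF i] zig_D(2)[OF tf(1)]
      by (simp add: Zcat_simps del: upt_Suc add: nth_map_upt less_Suc_eq_le)
  qed
  have rr': "\<And>i. i \<le> ?n \<Longrightarrow> Cmp D (zrsl t ! i) (zrsl t' ! i) = Idt D (zregs ?Y ! i)"
  proof -
    fix i assume i: "i \<le> ?n"
    have "zrsl (Cmp (Zcat D) t t') ! i = zrsl (Idt (Zcat D) ?Y) ! i" using e2 by simp
    then show "Cmp D (zrsl t ! i) (zrsl t' ! i) = Idt D (zregs ?Y ! i)"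
      using i st' aid nm hat_id[OF i] zig_D(2)[OF tf(2)]
      by (simp add: Zcat_simps del: upt_Suc add: nth_map_upt less_Suc_eq_le)
  qed
  have ss: "\<And>j. j < ?n \<Longrightarrow> Cmp D (zssl t' ! j) (zssl t ! j) = Idt D (zsings ?X ! j)"
  proof -
    fix j assume j: "j < ?n"
    have "zssl (Cmp (Zcat D) t' t) ! j = zssl (Idt (Zcat D) ?X) ! j" using e1 by simp
    then show "Cmp D (zssl t' ! j) (zssl t ! j) = Idt D (zsings ?X ! j)"
      using j aid zig_D(3)[OF tf(1)] by (simp add: Zcat_simps)
  qed
  have ss': "\<And>j. j < ?n \<Longrightarrow> Cmp D (zssl t ! j) (zssl t' ! j) = Idt D (zsings ?Y ! j)"
  proof -
    fix j assume j: "j < ?n"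
    have "zssl (Cmp (Zcat D) t t') ! j = zssl (Idt (Zcat D) ?Y) ! j" using e2 by simp
    then show "Cmp D (zssl t ! j) (zssl t' ! j) = Idt D (zsings ?Y ! j)"
      using j bid nm zig_D(3)[OF tf(2)] mono_len[OF mb] by (simp add: Zcat_simps)
  qed
  have risos: "\<forall>x\<in>set (zrsl t). is_iso D x"
  proof
    fix x assume "x \<in> set (zrsl t)"
    then obtain i where i: "i < length (zrsl t)" "x = zrsl t ! i" by (auto simp: in_set_conv_nth)
    have i': "i \<le> ?n" using i tf(4) nm by simp
    have h1: "hm D (zregs ?X ! i) (zregs ?Y ! i) (zrsl t ! i)" using tf(6)[of i] i' nm aid hat_id[OF i'] by simp
    have h2: "hm D (zregs ?Y ! i) (zregs ?X ! i) (zrsl t' ! i)" using t'f(6)[of i] i' nm bid hat_id[OF i'] st' by simp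
    show "is_iso D x" unfolding is_iso_def using h1 h2 rr[OF i'] rr'[OF i'] i(2) unfolding hm_def by auto
  qed
  have sisos: "\<forall>x\<in>set (zssl t). is_iso D x"
  proof
    fix x assume "x \<in> set (zssl t)"
    then obtain j where j: "j < length (zssl t)" "x = zssl t ! j" by (auto simp: in_set_conv_nth)
    have j': "j < ?n" using j tf(5) by simp
    have h1: "hm D (zsings ?X ! j) (zsings ?Y ! j) (zssl t ! j)" using tf(7)[OF j'] aid j' by simp
    have h2: "hm D (zsings ?Y ! j) (zsings ?X ! j) (zssl t' ! j)" using t'f(7)[of j] j' nm bid st' by simp
    show "is_iso D x" unfolding is_iso_def using h1 h2 ss[OF j'] ss'[OF j'] j(2) unfolding hm_def by auto
  qed
  show ?thesis using nm aid risos sisos by simp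
qed

end

context zz begin

interpretation E: zc "Zcat D" by (unfold_locales) (rule Zcat_cat)

lemma zsrc_cmp: "zsrc (Cmp (Zcat D) g f) = zsrc f" and ztgt_cmp: "ztgt (Cmp (Zcat D) g f) = ztgt g"
  by (simp_all add: Zcat_simps)

lemma zsrc_id: "zsrc (Idt (Zcat D) X) = X" and ztgt_id: "ztgt (Idt (Zcat D) X) = X"
  by (simp_all add: Zcat_simps)

lemma simple_decomp:
  assumes s: "pi_cocartesian (Zcat D) s" and ds: "distinct (zfs s)"
  shows "\<exists>t. is_iso (Zcat D) t \<and> hm (Zcat D) (lob D (zsrc s) (zfs s) (zlen (ztgt s))) (ztgt s) t \<and>
      Cmp (Zcat D) t (lar D (zsrc s) (zfs s) (zlen (ztgt s))) = s"
proof -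
  have sz: "is_zmap D s" using cocart_ar[OF s] .
  let ?X = "zsrc s" and ?Y = "ztgt s" and ?\<phi> = "zfs s" and ?m = "zlen (ztgt s)"
  let ?L = "lar D ?X ?\<phi> ?m" and ?X' = "lob D ?X ?\<phi> ?m"
  have m\<phi>: "mono_map (zlen ?X) ?m ?\<phi>" using zmap_mono[OF sz] .
  have sm: "smono ?\<phi> (zlen ?X) ?m" by (rule smono.intro[OF m\<phi> ds])
  have zX: "is_zig D ?X" using zmapL_facts(1)[OF conjunct2[OF zmap_D[OF sz]]] .
  have Lz: "is_zmap D ?L" using lar_zmap[OF zX sm] .
  have Lc: "pi_cocartesian (Zcat D) ?L" using lar_cocart[OF zX sm] .
  have Ls: "zsrc ?L = ?X" "ztgt ?L = ?X'" "zfs ?L = ?\<phi>" by (simp_all add: lar_def)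
  have lX': "zlen ?X' = ?m" using lob_sel(1) .
  have hL: "hm (Zcat D) ?X ?X' ?L" using hm_zmap[OF Lz] Ls by simp
  have hs: "hm (Zcat D) ?X ?Y s" using hm_zmap[OF sz] .
  have mi: "mono_map ?m ?m [0..<?m]" by (rule mono_id)
  have mp: "map (\<lambda>j. [0..<?m] ! j) ?\<phi> = ?\<phi>" using map_nth_id[OF m\<phi>] .
  obtain t where t: "hm (Zcat D) ?X' ?Y t" "Cmp (Zcat D) t ?L = s" "zfs t = [0..<?m]"
    using cocart_ex[OF Lc sz Ls(1)[symmetric], of "[0..<?m]"] mi mp Ls lX' by auto
  obtain t' where t': "hm (Zcat D) ?Y ?X' t'" "Cmp (Zcat D) t' s = ?L" "zfs t' = [0..<?m]"
    using cocart_ex[OF s Lz Ls(1), of "[0..<?m]"] mi mp Ls lX' by auto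
  have mii: "map (\<lambda>j. [0..<?m] ! j) [0..<?m] = [0..<?m]" using map_nth_id[OF mi] .
  have e1: "Cmp (Zcat D) t' t = Idt (Zcat D) ?X'"
  proof (rule cocart_uniq[OF Lc Lz refl, of "[0..<?m]"])
    show "mono_map (zlen (ztgt ?L)) (zlen (ztgt ?L)) [0..<?m]" using mi Ls lX' by simp
    show "map (\<lambda>j. [0..<?m] ! j) (zfs ?L) = zfs ?L" using mp Ls by simp
    show "hm (Zcat D) (ztgt ?L) (ztgt ?L) (Cmp (Zcat D) t' t)" using E.hm_comp[OF t(1) t'(1)] Ls by simp
    show "Cmp (Zcat D) (Cmp (Zcat D) t' t) ?L = ?L"
      using E.hm_assoc[OF hL t(1) t'(1)] t(2) t'(2) by simp
    show "zfs (Cmp (Zcat D) t' t) = [0..<?m]" using t(3) t'(3) mii by (simp add: zfs_cmp)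
    show "hm (Zcat D) (ztgt ?L) (ztgt ?L) (Idt (Zcat D) ?X')"
      using E.hm_id[OF conjunct2[OF E.hm_ob[OF hL]]] Ls by simp
    show "Cmp (Zcat D) (Idt (Zcat D) ?X') ?L = ?L" using E.id_l[OF hL] .
    show "zfs (Idt (Zcat D) ?X') = [0..<?m]" using lX' by (simp add: zfs_id)
  qed
  have e2: "Cmp (Zcat D) t t' = Idt (Zcat D) ?Y"
  proof (rule cocart_uniq[OF s sz refl, of "[0..<?m]"])
    show "mono_map (zlen ?Y) (zlen ?Y) [0..<?m]" using mi by simp
    show "map (\<lambda>j. [0..<?m] ! j) (zfs s) = zfs s" using mp by simp
    show "hm (Zcat D) ?Y ?Y (Cmp (Zcat D) t t')" using E.hm_comp[OF t'(1) t(1)] .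
    show "Cmp (Zcat D) (Cmp (Zcat D) t t') s = s"
      using E.hm_assoc[OF hs t'(1) t(1)] t(2) t'(2) by simp
    show "zfs (Cmp (Zcat D) t t') = [0..<?m]" using t(3) t'(3) mii by (simp add: zfs_cmp)
    show "hm (Zcat D) ?Y ?Y (Idt (Zcat D) ?Y)"
      using E.hm_id[OF conjunct2[OF E.hm_ob[OF hs]]] by simp
    show "Cmp (Zcat D) (Idt (Zcat D) ?Y) s = s" using E.id_l[OF hs] .
    show "zfs (Idt (Zcat D) ?Y) = [0..<?m]" by (simp add: zfs_id)
  qed
  have "is_iso (Zcat D) t"
    unfolding is_iso_def using t(1) t'(1) e1 e2 unfolding hm_def by auto
  then show ?thesis using t by blast
qed

lemma uniq_fact:
  assumes s: "pi_cocartesian (Zcat D) s" and s': "pi_cocartesian (Zcat D) s'"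
    and p: "is_zmap D p" "pi_vertical p" and p': "is_zmap D p'" "pi_vertical p'"
    and sp: "ztgt s = zsrc p" and sp': "ztgt s' = zsrc p'"
    and eq: "Cmp (Zcat D) p s = Cmp (Zcat D) p' s'"
  shows "\<exists>t. is_iso (Zcat D) t \<and> Dom (Zcat D) t = Cod (Zcat D) s \<and> Cod (Zcat D) t = Cod (Zcat D) s' \<and>
          Cmp (Zcat D) t s = s' \<and> Cmp (Zcat D) p' t = p"
proof -
  have sz: "is_zmap D s" and s'z: "is_zmap D s'" using cocart_ar s s' by auto
  let ?f = "Cmp (Zcat D) p s"
  have hs: "hm (Zcat D) (zsrc s) (ztgt s) s" and hs': "hm (Zcat D) (zsrc s') (ztgt s') s'"
    using hm_zmap sz s'z by auto
  have hp: "hm (Zcat D) (ztgt s) (ztgt p) p" and hp': "hm (Zcat D) (ztgt s') (ztgt p') p'"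
    using hm_zmap p(1) p'(1) sp sp' by auto
  have src: "zsrc s' = zsrc s" using arg_cong[OF eq, of zsrc] by (simp add: zsrc_cmp)
  have tgt: "ztgt p' = ztgt p" using arg_cong[OF eq, of ztgt] by (simp add: ztgt_cmp)
  let ?m = "zlen (ztgt s)"
  have lm: "zlen (ztgt p) = ?m" using p(2) sp unfolding pi_vertical_def by simp
  have lm': "zlen (ztgt s') = ?m" using p'(2) sp' tgt lm unfolding pi_vertical_def by simp
  have fp: "zfs p = [0..<?m]" using p(2) sp unfolding pi_vertical_def by simp
  have fp': "zfs p' = [0..<?m]" using p'(2) sp' lm' unfolding pi_vertical_def by simp
  have ms: "mono_map (zlen (zsrc s)) ?m (zfs s)" using zmap_mono[OF sz] .
  have ms': "mono_map (zlen (zsrc s')) ?m (zfs s')" using zmap_mono[OF s'z] lm' by simp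
  have ff: "zfs ?f = zfs s" using map_nth_id[OF ms] fp by (simp add: zfs_cmp)
  have ff': "zfs ?f = zfs s'" using map_nth_id[OF ms'] fp' eq by (simp add: zfs_cmp)
  have mi: "mono_map ?m ?m [0..<?m]" by (rule mono_id)
  have mii: "map (\<lambda>j. [0..<?m] ! j) [0..<?m] = [0..<?m]" using map_nth_id[OF mi] .
  have mps: "map (\<lambda>j. [0..<?m] ! j) (zfs s) = zfs s" using map_nth_id[OF ms] .
  obtain t where t: "hm (Zcat D) (ztgt s) (ztgt s') t" "Cmp (Zcat D) t s = s'" "zfs t = [0..<?m]"
    using cocart_ex[OF s s'z src, of "[0..<?m]"] mi lm' mps ff ff' by auto
  obtain t' where t': "hm (Zcat D) (ztgt s') (ztgt s) t'" "Cmp (Zcat D) t' s' = s" "zfs t' = [0..<?m]"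
    using cocart_ex[OF s' sz src[symmetric], of "[0..<?m]"] mi lm' mps ff ff' by auto
  have hs2: "hm (Zcat D) (zsrc s) (ztgt s') s'" using hs' src by simp
  have e1: "Cmp (Zcat D) t' t = Idt (Zcat D) (ztgt s)"
  proof (rule cocart_uniq[OF s sz refl, of "[0..<?m]"])
    show "mono_map (zlen (ztgt s)) (zlen (ztgt s)) [0..<?m]" using mi by simp
    show "map (\<lambda>j. [0..<?m] ! j) (zfs s) = zfs s" by (rule mps)
    show "hm (Zcat D) (ztgt s) (ztgt s) (Cmp (Zcat D) t' t)" using E.hm_comp[OF t(1) t'(1)] .
    show "Cmp (Zcat D) (Cmp (Zcat D) t' t) s = s" using E.hm_assoc[OF hs t(1) t'(1)] t(2) t'(2) by simp
    show "zfs (Cmp (Zcat D) t' t) = [0..<?m]" using t(3) t'(3) mii by (simp add: zfs_cmp)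
    show "hm (Zcat D) (ztgt s) (ztgt s) (Idt (Zcat D) (ztgt s))"
      using E.hm_id[OF conjunct2[OF E.hm_ob[OF hs]]] by simp
    show "Cmp (Zcat D) (Idt (Zcat D) (ztgt s)) s = s" using E.id_l[OF hs] .
    show "zfs (Idt (Zcat D) (ztgt s)) = [0..<?m]" by (simp add: zfs_id)
  qed
  have mps': "map (\<lambda>j. [0..<?m] ! j) (zfs s') = zfs s'" using map_nth_id[OF ms'] .
  have e2: "Cmp (Zcat D) t t' = Idt (Zcat D) (ztgt s')"
  proof (rule cocart_uniq[OF s' s'z refl, of "[0..<?m]"])
    show "mono_map (zlen (ztgt s')) (zlen (ztgt s')) [0..<?m]" using mi lm' by simp
    show "map (\<lambda>j. [0..<?m] ! j) (zfs s') = zfs s'" by (rule mps')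
    show "hm (Zcat D) (ztgt s') (ztgt s') (Cmp (Zcat D) t t')" using E.hm_comp[OF t'(1) t(1)] .
    show "Cmp (Zcat D) (Cmp (Zcat D) t t') s' = s'" using E.hm_assoc[OF hs2 t'(1) t(1)] t(2) t'(2) by simp
    show "zfs (Cmp (Zcat D) t t') = [0..<?m]" using t(3) t'(3) mii by (simp add: zfs_cmp)
    show "hm (Zcat D) (ztgt s') (ztgt s') (Idt (Zcat D) (ztgt s'))"
      using E.hm_id[OF conjunct2[OF E.hm_ob[OF hs']]] by simp
    show "Cmp (Zcat D) (Idt (Zcat D) (ztgt s')) s' = s'" using E.id_l[OF hs'] .
    show "zfs (Idt (Zcat D) (ztgt s')) = [0..<?m]" using lm' by (simp add: zfs_id)
  qed
  have iso: "is_iso (Zcat D) t" unfolding is_iso_def using t(1) t'(1) e1 e2 unfolding hm_def by auto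
  have fz: "is_zmap D ?f" using E.hm_comp[OF hs hp] by (simp add: hmE)
  have e3: "Cmp (Zcat D) p' t = p"
  proof (rule cocart_uniq[OF s fz zsrc_cmp, of "[0..<?m]"])
    show "mono_map (zlen (ztgt s)) (zlen (ztgt ?f)) [0..<?m]" using mi lm by (simp add: ztgt_cmp)
    show "map (\<lambda>j. [0..<?m] ! j) (zfs s) = zfs ?f" using mps ff by simp
    show "hm (Zcat D) (ztgt s) (ztgt ?f) (Cmp (Zcat D) p' t)" using E.hm_comp[OF t(1) hp'] tgt
      by (simp add: ztgt_cmp)
    show "Cmp (Zcat D) (Cmp (Zcat D) p' t) s = ?f" using E.hm_assoc[OF hs t(1) hp'] t(2) eq by simp
    show "zfs (Cmp (Zcat D) p' t) = [0..<?m]" using t(3) fp' mii by (simp add: zfs_cmp)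
    show "hm (Zcat D) (ztgt s) (ztgt ?f) p" using hp by (simp add: ztgt_cmp)
    show "Cmp (Zcat D) p s = ?f" ..
    show "zfs p = [0..<?m]" by (rule fp)
  qed
  have "Dom (Zcat D) t = Cod (Zcat D) s \<and> Cod (Zcat D) t = Cod (Zcat D) s'"
    using t(1) unfolding hm_def by (simp add: Zcat_simps(4))
  then show ?thesis using iso t(2) e3 by blast
qed

end

context zz begin

interpretation E: zc "Zcat D" by (unfold_locales) (rule Zcat_cat)

lemma swap:
  assumes p: "is_zmap D p" and pv: "pi_vertical p" and sm: "smono \<phi> (zlen (ztgt p)) m"
  shows "\<exists>p'. hm (Zcat D) (lob D (zsrc p) \<phi> m) (lob D (ztgt p) \<phi> m) p' \<and> pi_vertical p' \<and>
     Cmp (Zcat D) p' (lar D (zsrc p) \<phi> m) = Cmp (Zcat D) (lar D (ztgt p) \<phi> m) p \<and>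
     set (zrsl p') \<subseteq> set (zrsl p) \<and> set (zssl p') \<subseteq> set (zssl p) \<union> set (zrsl p)"
proof -
  let ?A = "zsrc p" and ?B = "ztgt p"
  let ?n = "zlen ?A"
  have nB: "zlen ?B = ?n" using pv unfolding pi_vertical_def by simp
  have fp: "zfs p = [0..<?n]" using pv unfolding pi_vertical_def by simp
  have smA: "smono \<phi> ?n m" using sm nB by simp
  interpret smono \<phi> ?n m by fact
  note pf = zmapL_facts[OF conjunct2[OF zmap_D[OF p]]]
  have zA: "is_zig D ?A" and zB: "is_zig D ?B" using pf by auto
  let ?LA = "lar D ?A \<phi> m" and ?LB = "lar D ?B \<phi> m"
  have LAz: "is_zmap D ?LA" using lar_zmap[OF zA smA] .
  have LBz: "is_zmap D ?LB" using lar_zmap[OF zB sm] .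
  have LAc: "pi_cocartesian (Zcat D) ?LA" using lar_cocart[OF zA smA] .
  have hp: "hm (Zcat D) ?A ?B p" using hm_zmap[OF p] .
  have hLB: "hm (Zcat D) ?B (lob D ?B \<phi> m) ?LB" using hm_zmap[OF LBz] by (simp add: lar_def)
  let ?h = "Cmp (Zcat D) ?LB p"
  have hh: "hm (Zcat D) ?A (lob D ?B \<phi> m) ?h" using E.hm_comp[OF hp hLB] .
  have hz: "is_zmap D ?h" using hh by (simp add: hmE)
  have fh: "zfs ?h = \<phi>" using fp len map_nth[of \<phi>] by (simp add: zfs_cmp lar_def)
  have mi: "mono_map m m [0..<m]" by (rule mono_id)
  have mp: "map (\<lambda>j. [0..<m] ! j) \<phi> = \<phi>" using map_nth_id[OF mm] .
  obtain p' where p': "hm (Zcat D) (lob D ?A \<phi> m) (lob D ?B \<phi> m) p'" "Cmp (Zcat D) p' ?LA = ?h"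
      "zfs p' = [0..<m]"
    using cocart_ex[OF LAc hz, of "[0..<m]"] hh mi mp fh lob_sel(1) by (auto simp: hmE lar_def)
  have p'z: "is_zmap D p'" and p's: "zsrc p' = lob D ?A \<phi> m" "ztgt p' = lob D ?B \<phi> m"
    using p'(1) by (auto simp: hmE)
  have pv': "pi_vertical p'" unfolding pi_vertical_def using p's p'(3) lob_sel(1) by simp
  have p'L: "zmapL D (lob D ?A \<phi> m) (lob D ?B \<phi> m) [0..<m] (zrsl p') (zssl p')"
    using zmap_D[OF p'z] p's p'(3) by simp
  have p'e: "p' = AZig (lob D ?A \<phi> m) (lob D ?B \<phi> m) [0..<m] (zrsl p') (zssl p')"
    using zmap_D[OF p'z] p's p'(3) by simp
  have ceq: "AZig ?A (lob D ?B \<phi> m) (map (\<lambda>j. [0..<m] ! j) \<phi>) (zrsl p') (map (\<lambda>k. zssl p' ! (\<phi>!k)) [0..<?n]) = ?h"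
    using lift_comp_eq[OF zA smA p'L] p'e p'(2) by simp
  have hr: "zrsl ?h = map (\<lambda>i. Cmp D (zrsl ?LB ! i) (zrsl p ! hat \<phi> i)) [0..<Suc (zlen (lob D ?B \<phi> m))]"
    by (simp add: Zcat_simps lar_def del: upt_Suc)
  have hsl: "zssl ?h = map (\<lambda>j. Cmp D (zssl ?LB ! ([0..<?n] ! j)) (zssl p ! j)) [0..<length [0..<?n]]"
    using fp by (simp add: Zcat_simps)
  have rr: "\<And>i. i \<le> m \<Longrightarrow> zrsl p' ! i = zrsl p ! hat \<phi> i"
  proof -
    fix i assume i: "i \<le> m"
    have "zrsl p' ! i = zrsl ?h ! i" using arg_cong[OF ceq, of zrsl] by simp
    also have "\<dots> = Cmp D (Idt D (zregs ?B ! hat \<phi> i)) (zrsl p ! hat \<phi> i)"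
      unfolding hr using i hat_id[OF hat_le_n[OF mm, of i]] lob_sel(1)
      by (simp add: lar_def del: upt_Suc add: nth_map_upt less_Suc_eq_le)
    also have "\<dots> = zrsl p ! hat \<phi> i"
      using id_l[OF pf(6)[of "hat \<phi> i"]] hat_le_n[OF mm, of i] nB fp hat_id[OF hat_le_n[OF mm, of i]] by simp
    finally show "zrsl p' ! i = zrsl p ! hat \<phi> i" .
  qed
  have ss: "\<And>k. k < ?n \<Longrightarrow> zssl p' ! (\<phi>!k) = zssl p ! k"
  proof -
    fix k assume k: "k < ?n"
    have "zssl p' ! (\<phi>!k) = zssl ?h ! k" using arg_cong[OF ceq, of "\<lambda>x. zssl x ! k"] k by simp
    also have "\<dots> = Cmp D (Idt D (zsings ?B ! k)) (zssl p ! k)"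
      unfolding hsl using k len by (simp add: lar_def)
    also have "\<dots> = zssl p ! k" using id_l[OF pf(7)[OF k]] fp k by simp
    finally show "zssl p' ! (\<phi>!k) = zssl p ! k" .
  qed
  note p'f = zmapL_facts[OF p'L]
  have lp: "length (zrsl p) = Suc ?n" using pf(4) nB by simp
  have sub1: "set (zrsl p') \<subseteq> set (zrsl p)"
  proof
    fix x assume "x \<in> set (zrsl p')"
    then obtain i where i: "i < length (zrsl p')" "x = zrsl p' ! i" by (auto simp: in_set_conv_nth)
    have i': "i \<le> m" using i p'f(4) lob_sel(1) by simp
    have "hat \<phi> i < length (zrsl p)" using hat_le_n[OF mm, of i] lp by simp
    then show "x \<in> set (zrsl p)" using rr[OF i'] i(2) by simp
  qed
  have sub2: "set (zssl p') \<subseteq> set (zssl p) \<union> set (zrsl p)"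
  proof
    fix x assume "x \<in> set (zssl p')"
    then obtain j where j: "j < length (zssl p')" "x = zssl p' ! j" by (auto simp: in_set_conv_nth)
    have j': "j < m" using j p'f(5) lob_sel(1) by simp
    show "x \<in> set (zssl p) \<union> set (zrsl p)"
    proof (cases "inim \<phi> j")
      case True
      then obtain k where k: "k < ?n" "\<phi>!k = j" using inim_iff by blast
      then show ?thesis using ss[OF k(1)] j(2) pf(5) by auto
    next
      case False
      have a: "Cmp D (zssl p' ! j) (zfwd (lob D ?A \<phi> m) ! j) = Cmp D (zfwd (lob D ?B \<phi> m) ! j) (zrsl p' ! j)"
        using p'L j' hat_id[of j m] lob_sel(1) unfolding zmapL_def by auto
      have t1: "hm D (zregs ?A ! hat \<phi> j) (zregs ?B ! hat \<phi> j) (zssl p' ! j)"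
        using p'f(7)[of j] j' lob_sel(1) lob_sel(3)[OF j'] False by simp
      have t2: "hm D (zregs ?A ! hat \<phi> j) (zregs ?B ! hat \<phi> j) (zrsl p' ! j)"
        using p'f(6)[of j] j' lob_sel(2) hat_id[of j m] lob_sel(1) by simp
      have "zssl p' ! j = zrsl p' ! j"
        using a lob_sel(4)[OF j'] False id_r[OF t1] id_l[OF t2] by simp
      moreover have "zrsl p' ! j \<in> set (zrsl p')" using j' p'f(4) lob_sel(1) by simp
      ultimately show ?thesis using sub1 j(2) by auto
    qed
  qed
  show ?thesis using p'(1,2) pv' sub1 sub2 by blast
qed

lemma par_comp:
  assumes p: "parallel_degen_in (Zcat D) S p" and q: "parallel_degen_in (Zcat D) S q"
    and pq: "ztgt p = zsrc q"
    and Sc: "\<And>x y. x \<in> S \<Longrightarrow> y \<in> S \<Longrightarrow> Cod D x = Dom D y \<Longrightarrow> Cmp D y x \<in> S"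
  shows "parallel_degen_in (Zcat D) S (Cmp (Zcat D) q p)"
proof -
  have pz: "is_zmap D p" and qz: "is_zmap D q" using p q unfolding parallel_degen_in_def by (auto simp: Zcat_simps)
  have pv: "pi_vertical p" and qv: "pi_vertical q" using p q unfolding parallel_degen_in_def by auto
  let ?n = "zlen (zsrc p)"
  have fp: "zfs p = [0..<?n]" and np: "zlen (ztgt p) = ?n" using pv unfolding pi_vertical_def by auto
  have fq: "zfs q = [0..<?n]" and nq: "zlen (ztgt q) = ?n" using qv pq np unfolding pi_vertical_def by auto
  note pf = zmapL_facts[OF conjunct2[OF zmap_D[OF pz]]]
  note qf = zmapL_facts[OF conjunct2[OF zmap_D[OF qz]]]
  have cz: "is_zmap D (Cmp (Zcat D) q p)" using zcomp_zmap[OF pz qz pq] .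
  have vert: "pi_vertical (Cmp (Zcat D) q p)" unfolding pi_vertical_def
    using fp fq nq map_nth_id[OF mono_id[of ?n]] by (simp add: Zcat_simps)
  have r: "set (zrsl (Cmp (Zcat D) q p)) \<subseteq> S"
  proof
    fix x assume "x \<in> set (zrsl (Cmp (Zcat D) q p))"
    then obtain i where i: "i \<le> ?n" "x = Cmp D (zrsl q ! i) (zrsl p ! i)"
      using nq fq hat_id by (auto simp: Zcat_simps less_Suc_eq_le simp del: upt_Suc)
    have a: "zrsl p ! i \<in> S" "zrsl q ! i \<in> S" using p q i(1) pf(4) qf(4) np nq unfolding parallel_degen_in_def
      by (auto simp: less_Suc_eq_le)
    have "Cod D (zrsl p ! i) = Dom D (zrsl q ! i)"
      using pf(6)[of i] qf(6)[of i] i(1) np nq fq pq hat_id[OF i(1)] unfolding hm_def by simp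
    then show "x \<in> S" using Sc[OF a] i(2) by simp
  qed
  have s: "set (zssl (Cmp (Zcat D) q p)) \<subseteq> S"
  proof
    fix x assume "x \<in> set (zssl (Cmp (Zcat D) q p))"
    then obtain j where j: "j < ?n" "x = Cmp D (zssl q ! j) (zssl p ! j)"
      using fp by (auto simp: Zcat_simps)
    have a: "zssl p ! j \<in> S" "zssl q ! j \<in> S" using p q j(1) pf(5) qf(5) np pq unfolding parallel_degen_in_def
      by auto
    have "Cod D (zssl p ! j) = Dom D (zssl q ! j)"
      using pf(7)[of j] qf(7)[of j] j(1) np fp pq unfolding hm_def by simp
    then show "x \<in> S" using Sc[OF a] j(2) by simp
  qed
  show ?thesis unfolding parallel_degen_in_def using cz vert r s by (simp add: Zcat_simps del: Zcat_simps(5))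
qed

lemma iso_par:
  assumes t: "is_iso (Zcat D) t" and S: "\<And>x. is_iso D x \<Longrightarrow> x \<in> S"
  shows "parallel_degen_in (Zcat D) S t"
  using iso_vert[OF t] t S unfolding parallel_degen_in_def pi_vertical_def is_iso_def by auto

end

lemma lift0_cat:
  assumes C: "is_category C"
  shows "is_category (lift0 C)"
proof -
  interpret zc C by unfold_locales (rule C)
  show ?thesis unfolding is_category_def lift0_def
    using c1 c2 c3 c4 c5 by (auto simp: image_iff)
qed

lemma Zn_cat: "is_category C \<Longrightarrow> is_category (Zn C k)"
proof (induction k)
  case 0 then show ?case using lift0_cat by simp
next
  case (Suc k)
  interpret zz "Zn C k" by unfold_locales (rule Suc.IH[OF Suc.prems])
  show ?case using Zcat_cat by simp
qed

lemma degen_comp: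
  assumes C: "is_category C"
  shows "x \<in> degen C k \<Longrightarrow> y \<in> degen C k \<Longrightarrow> Cod (Zn C k) x = Dom (Zn C k) y \<Longrightarrow> Cmp (Zn C k) y x \<in> degen C k"
proof (cases k)
  case 0
  interpret zc "Zn C 0" by unfold_locales (rule Zn_cat[OF C])
  show "x \<in> degen C k \<Longrightarrow> y \<in> degen C k \<Longrightarrow> Cod (Zn C k) x = Dom (Zn C k) y \<Longrightarrow> Cmp (Zn C k) y x \<in> degen C k"
    using iso_comp 0 by simp
next
  case (Suc k')
  show "x \<in> degen C k \<Longrightarrow> y \<in> degen C k \<Longrightarrow> Cod (Zn C k) x = Dom (Zn C k) y \<Longrightarrow> Cmp (Zn C k) y x \<in> degen C k"
    using Suc by (simp add: comp_closure.cmp)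
qed

lemma iso_degen:
  assumes C: "is_category C"
  shows "is_iso (Zn C k) x \<Longrightarrow> x \<in> degen C k"
proof (induction k arbitrary: x)
  case 0 then show ?case by simp
next
  case (Suc k)
  interpret zz "Zn C k" by unfold_locales (rule Zn_cat[OF C])
  have "parallel_degen_in (Zcat (Zn C k)) (degen C k) x"
    by (rule iso_par) (use Suc in simp_all)
  then show ?case by (simp add: comp_closure.gen)
qed

lemma distinct_map_nth:
  "distinct xs \<Longrightarrow> distinct \<phi> \<Longrightarrow> (\<forall>x\<in>set xs. x < length \<phi>) \<Longrightarrow> distinct (map (\<lambda>j. \<phi> ! j) xs)"
  by (induction xs) (auto simp: in_set_conv_nth nth_eq_iff_index_eq)

definition PF :: "('o,'m) cat \<Rightarrow> nat \<Rightarrow> ('o,'m) zar \<Rightarrow> bool" where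
  "PF C n f \<longleftrightarrow> (\<exists>s p. simple_degen C n s \<and> parallel_degen C n p \<and>
            Dom (Zn C n) s = Dom (Zn C n) f \<and> Cod (Zn C n) s = Dom (Zn C n) p \<and>
            Cod (Zn C n) p = Cod (Zn C n) f \<and> Cmp (Zn C n) p s = f)"

lemma existence:
  assumes C: "is_category C" and f: "f \<in> degen C (Suc k)"
  shows "PF C (Suc k) f"
proof -
  interpret zz "Zn C k" by unfold_locales (rule Zn_cat[OF C])
  interpret E: zc "Zcat (Zn C k)" by unfold_locales (rule Zcat_cat)
  let ?D = "Zn C k" and ?E = "Zcat (Zn C k)" and ?S = "degen C k"
  have Sc: "\<And>x y. x \<in> ?S \<Longrightarrow> y \<in> ?S \<Longrightarrow> Cod ?D x = Dom ?D y \<Longrightarrow> Cmp ?D y x \<in> ?S"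
    using degen_comp[OF C] by blast
  have Si: "\<And>x. is_iso ?D x \<Longrightarrow> x \<in> ?S" using iso_degen[OF C] by blast
  have fE: "f \<in> comp_closure ?E ({f. simple_degen_in ?E f} \<union> {f. parallel_degen_in ?E ?S f})"
    using f by simp
  have "PF C (Suc k) f" using fE
  proof (induction rule: comp_closure.induct)
    case (gen f)
    then show ?case
    proof
      assume "f \<in> {f. simple_degen_in ?E f}"
      then have s: "pi_cocartesian ?E f" "distinct (zfs f)" unfolding simple_degen_in_def by auto
      have fz: "is_zmap ?D f" using cocart_ar[OF s(1)] .
      have hf: "hm ?E (zsrc f) (ztgt f) f" using hm_zmap[OF fz] .
      have io: "is_iso ?E (Idt ?E (ztgt f))" using E.iso_id E.hm_ob[OF hf] by blast
      have p: "parallel_degen_in ?E ?S (Idt ?E (ztgt f))" by (rule iso_par[OF io Si])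
      show ?thesis unfolding PF_def simple_degen_def parallel_degen_def simple_degen_in_def
        apply (rule exI[of _ f], rule exI[of _ "Idt ?E (ztgt f)"])
        using s p E.id_l[OF hf] by (simp add: Zcat_simps(3,4,6) del: Zcat_simps(5))
    next
      assume "f \<in> {f. parallel_degen_in ?E ?S f}"
      then have p: "parallel_degen_in ?E ?S f" by simp
      have fz: "is_zmap ?D f" using p unfolding parallel_degen_in_def by (simp add: Zcat_simps)
      have hf: "hm ?E (zsrc f) (ztgt f) f" using hm_zmap[OF fz] .
      have zX: "is_zig ?D (zsrc f)" using zmapL_facts(1)[OF conjunct2[OF zmap_D[OF fz]]] .
      have s: "pi_cocartesian ?E (Idt ?E (zsrc f))" using cocart_id[OF zX] .
      show ?thesis unfolding PF_def simple_degen_def parallel_degen_def simple_degen_in_def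
        apply (rule exI[of _ "Idt ?E (zsrc f)"], rule exI[of _ f])
        using s p E.id_r[OF hf] by (simp add: Zcat_simps(3,4,6) del: Zcat_simps(5))
    qed
  next
    case (cmp f1 f2)
    obtain s1 p1 where sp1: "pi_cocartesian ?E s1" "distinct (zfs s1)" "parallel_degen_in ?E ?S p1"
      "zsrc s1 = zsrc f1" "ztgt s1 = zsrc p1" "ztgt p1 = ztgt f1" "Cmp ?E p1 s1 = f1"
      using cmp.IH(1) unfolding PF_def simple_degen_def parallel_degen_def simple_degen_in_def
      by (auto simp: Zcat_simps(3,4) simp del: Zcat_simps(5))
    obtain s2 p2 where sp2: "pi_cocartesian ?E s2" "distinct (zfs s2)" "parallel_degen_in ?E ?S p2"
      "zsrc s2 = zsrc f2" "ztgt s2 = zsrc p2" "ztgt p2 = ztgt f2" "Cmp ?E p2 s2 = f2"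
      using cmp.IH(2) unfolding PF_def simple_degen_def parallel_degen_def simple_degen_in_def
      by (auto simp: Zcat_simps(3,4) simp del: Zcat_simps(5))
    have f12: "ztgt f1 = zsrc f2" using cmp.hyps(3) by (simp add: Zcat_simps)
    have s1z: "is_zmap ?D s1" and s2z: "is_zmap ?D s2" using cocart_ar sp1(1) sp2(1) by auto
    have p1z: "is_zmap ?D p1" and p2z: "is_zmap ?D p2" using sp1(3) sp2(3)
      unfolding parallel_degen_in_def by (auto simp: Zcat_simps)
    have p1v: "pi_vertical p1" using sp1(3) unfolding parallel_degen_in_def by simp
    let ?Xs = "zsrc s1" and ?A = "ztgt s1" and ?B' = "ztgt p1" and ?B = "ztgt s2" and ?Ct = "ztgt p2"
    let ?\<phi> = "zfs s2" and ?m = "zlen (ztgt s2)"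
    have B's2: "zsrc s2 = ?B'" using sp1(6) sp2(4) f12 by simp
    obtain t where t: "is_iso ?E t" "hm ?E (lob ?D ?B' ?\<phi> ?m) ?B t" "Cmp ?E t (lar ?D ?B' ?\<phi> ?m) = s2"
      using simple_decomp[OF sp2(1,2)] B's2 by auto
    have m\<phi>: "mono_map (zlen ?B') ?m ?\<phi>" using zmap_mono[OF s2z] B's2 by simp
    have sm: "smono ?\<phi> (zlen ?B') ?m" by (rule smono.intro[OF m\<phi> sp2(2)])
    obtain p' where p': "hm ?E (lob ?D ?A ?\<phi> ?m) (lob ?D ?B' ?\<phi> ?m) p'" "pi_vertical p'"
       "Cmp ?E p' (lar ?D ?A ?\<phi> ?m) = Cmp ?E (lar ?D ?B' ?\<phi> ?m) p1"
       "set (zrsl p') \<subseteq> set (zrsl p1)" "set (zssl p') \<subseteq> set (zssl p1) \<union> set (zrsl p1)"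
      using swap[OF p1z p1v sm] sp1(5) by auto
    have p'par: "parallel_degen_in ?E ?S p'"
      using p' sp1(3) unfolding parallel_degen_in_def hm_def by auto
    have tpar: "parallel_degen_in ?E ?S t" by (rule iso_par[OF t(1) Si])
    have zA: "is_zig ?D ?A" using zmapL_facts(2)[OF conjunct2[OF zmap_D[OF s1z]]] .
    have nA: "zlen ?A = zlen ?B'" using p1v sp1(5) unfolding pi_vertical_def by simp
    have smA: "smono ?\<phi> (zlen ?A) ?m" using sm nA by simp
    let ?LA = "lar ?D ?A ?\<phi> ?m" and ?LB = "lar ?D ?B' ?\<phi> ?m"
    have LAc: "pi_cocartesian ?E ?LA" using lar_cocart[OF zA smA] .
    have LAz: "is_zmap ?D ?LA" using lar_zmap[OF zA smA] .
    have zB': "is_zig ?D ?B'" using zmapL_facts(2)[OF conjunct2[OF zmap_D[OF p1z]]] .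
    have LBz: "is_zmap ?D ?LB" using lar_zmap[OF zB' sm] .
    let ?s = "Cmp ?E ?LA s1"
    have sc: "pi_cocartesian ?E ?s" using cocart_comp[OF sp1(1) LAc] by (simp add: lar_def)
    have ms1: "mono_map (zlen ?Xs) (zlen ?A) (zfs s1)" using zmap_mono[OF s1z] .
    have ball: "\<forall>x\<in>set (zfs s1). x < length ?\<phi>"
      using mono_lt[OF ms1] mono_len[OF ms1] mono_len[OF m\<phi>] nA by (auto simp: in_set_conv_nth)
    have sd: "distinct (zfs ?s)" unfolding zfs_cmp
      using distinct_map_nth[OF sp1(2) sp2(2) ball] by (simp add: lar_def)
    have tp: "ztgt p' = zsrc t" using p'(1) t(2) by (simp add: hmE)
    have ptp: "parallel_degen_in ?E ?S (Cmp ?E t p')" using par_comp[OF p'par tpar tp Sc] .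
    let ?p = "Cmp ?E p2 (Cmp ?E t p')"
    have tp2: "ztgt (Cmp ?E t p') = zsrc p2" using t(2) sp2(5) by (simp add: hmE ztgt_cmp)
    have pp: "parallel_degen_in ?E ?S ?p" using par_comp[OF ptp sp2(3) tp2 Sc] .
    have hs1: "hm ?E ?Xs ?A s1" using hm_zmap[OF s1z] .
    have hp1: "hm ?E ?A ?B' p1" using hm_zmap[OF p1z] sp1(5) by simp
    have hLA: "hm ?E ?A (lob ?D ?A ?\<phi> ?m) ?LA" using hm_zmap[OF LAz] by (simp add: lar_def)
    have hLB: "hm ?E ?B' (lob ?D ?B' ?\<phi> ?m) ?LB" using hm_zmap[OF LBz] by (simp add: lar_def)
    have hp2: "hm ?E ?B ?Ct p2" using hm_zmap[OF p2z] sp2(5) by simp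
    have hf1: "hm ?E ?Xs ?B' f1" using E.hm_comp[OF hs1 hp1] sp1(7) by simp
    have hs2: "hm ?E ?B' ?B s2" using hm_zmap[OF s2z] B's2 by simp
    have e1: "Cmp ?E (Cmp ?E t p') ?s = Cmp ?E s2 f1"
    proof -
      have "Cmp ?E (Cmp ?E t p') ?s = Cmp ?E t (Cmp ?E p' ?s)"
        using E.hm_assoc[OF E.hm_comp[OF hs1 hLA] p'(1) t(2)] by simp
      also have "Cmp ?E p' ?s = Cmp ?E (Cmp ?E p' ?LA) s1" using E.hm_assoc[OF hs1 hLA p'(1)] .
      also have "\<dots> = Cmp ?E (Cmp ?E ?LB p1) s1" using p'(3) by simp
      also have "\<dots> = Cmp ?E ?LB f1" using E.hm_assoc[OF hs1 hp1 hLB] sp1(7) by simp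
      also have "Cmp ?E t (Cmp ?E ?LB f1) = Cmp ?E (Cmp ?E t ?LB) f1" using E.hm_assoc[OF hf1 hLB t(2)] .
      also have "\<dots> = Cmp ?E s2 f1" using t(3) by simp
      finally show ?thesis .
    qed
    have e2: "Cmp ?E ?p ?s = Cmp ?E f2 f1"
    proof -
      have hs: "hm ?E ?Xs (lob ?D ?A ?\<phi> ?m) ?s" using E.hm_comp[OF hs1 hLA] .
      have htp: "hm ?E (lob ?D ?A ?\<phi> ?m) ?B (Cmp ?E t p')" using E.hm_comp[OF p'(1) t(2)] .
      have "Cmp ?E ?p ?s = Cmp ?E p2 (Cmp ?E (Cmp ?E t p') ?s)" using E.hm_assoc[OF hs htp hp2] by simp
      also have "\<dots> = Cmp ?E p2 (Cmp ?E s2 f1)" using e1 by simp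
      also have "\<dots> = Cmp ?E (Cmp ?E p2 s2) f1" using E.hm_assoc[OF hf1 hs2 hp2] .
      finally show ?thesis using sp2(7) by simp
    qed
    have d1: "Dom ?E ?s = Dom ?E (Cmp ?E f2 f1)" using sp1(4) by (simp add: Zcat_simps(3) zsrc_cmp)
    have d2: "Cod ?E ?s = Dom ?E ?p" using p'(1) by (simp add: Zcat_simps(3,4) zsrc_cmp ztgt_cmp lar_def hmE)
    have d3: "Cod ?E ?p = Cod ?E (Cmp ?E f2 f1)" using sp2(6) by (simp add: Zcat_simps(4) ztgt_cmp)
    have "simple_degen C (Suc k) ?s" unfolding simple_degen_def simple_degen_in_def using sc sd by simp
    moreover have "parallel_degen C (Suc k) ?p" unfolding parallel_degen_def using pp by simp
    ultimately show ?case unfolding PF_def using d1 d2 d3 e2 by (intro exI[of _ ?s] exI[of _ ?p]) simp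
  qed
  then show ?thesis .
qed

theorem lemma3p5:
  fixes C :: "('o, 'm) cat" and n :: nat and f :: "('o, 'm) zar"
  assumes "is_category C" and "1 \<le> n" and "f \<in> degen C n"
  shows "(\<exists>s p. simple_degen C n s \<and> parallel_degen C n p \<and>
            Dom (Zn C n) s = Dom (Zn C n) f \<and> Cod (Zn C n) s = Dom (Zn C n) p \<and>
            Cod (Zn C n) p = Cod (Zn C n) f \<and> Cmp (Zn C n) p s = f) \<and>
         (\<forall>s p s' p'.
            simple_degen C n s \<and> parallel_degen C n p \<and>
            Cod (Zn C n) s = Dom (Zn C n) p \<and> Cmp (Zn C n) p s = f \<and>
            simple_degen C n s' \<and> parallel_degen C n p' \<and>
            Cod (Zn C n) s' = Dom (Zn C n) p' \<and> Cmp (Zn C n) p' s' = f \<longrightarrow>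
            (\<exists>\<theta>. is_iso (Zn C n) \<theta> \<and> Dom (Zn C n) \<theta> = Cod (Zn C n) s \<and>
                 Cod (Zn C n) \<theta> = Cod (Zn C n) s' \<and>
                 Cmp (Zn C n) \<theta> s = s' \<and> Cmp (Zn C n) p' \<theta> = p))"
proof -
  obtain k where n: "n = Suc k" using assms(2) by (cases n) auto
  interpret zz "Zn C k" by unfold_locales (rule Zn_cat[OF assms(1)])
  have ex: "PF C n f" using existence[OF assms(1)] assms(3) n by simp
  have uq: "\<forall>s p s' p'.
            simple_degen C n s \<and> parallel_degen C n p \<and>
            Cod (Zn C n) s = Dom (Zn C n) p \<and> Cmp (Zn C n) p s = f \<and>
            simple_degen C n s' \<and> parallel_degen C n p' \<and>
            Cod (Zn C n) s' = Dom (Zn C n) p' \<and> Cmp (Zn C n) p' s' = f \<longrightarrow>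
            (\<exists>\<theta>. is_iso (Zn C n) \<theta> \<and> Dom (Zn C n) \<theta> = Cod (Zn C n) s \<and>
                 Cod (Zn C n) \<theta> = Cod (Zn C n) s' \<and>
                 Cmp (Zn C n) \<theta> s = s' \<and> Cmp (Zn C n) p' \<theta> = p)"
  proof (intro allI impI)
    fix s p s' p'
    assume a: "simple_degen C n s \<and> parallel_degen C n p \<and>
            Cod (Zn C n) s = Dom (Zn C n) p \<and> Cmp (Zn C n) p s = f \<and>
            simple_degen C n s' \<and> parallel_degen C n p' \<and>
            Cod (Zn C n) s' = Dom (Zn C n) p' \<and> Cmp (Zn C n) p' s' = f"
    have s: "pi_cocartesian (Zcat (Zn C k)) s" and s': "pi_cocartesian (Zcat (Zn C k)) s'"
      using a n unfolding simple_degen_def simple_degen_in_def by auto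
    have pp: "parallel_degen_in (Zcat (Zn C k)) (degen C k) p" "parallel_degen_in (Zcat (Zn C k)) (degen C k) p'"
      using a n unfolding parallel_degen_def by auto
    have p: "is_zmap (Zn C k) p" "pi_vertical p" and p': "is_zmap (Zn C k) p'" "pi_vertical p'"
      using pp unfolding parallel_degen_in_def by (auto simp: Zcat_simps)
    have sp: "ztgt s = zsrc p" and sp': "ztgt s' = zsrc p'" using a n by (auto simp: Zcat_simps)
    have eq: "Cmp (Zcat (Zn C k)) p s = Cmp (Zcat (Zn C k)) p' s'" using a n by simp
    show "\<exists>\<theta>. is_iso (Zn C n) \<theta> \<and> Dom (Zn C n) \<theta> = Cod (Zn C n) s \<and>
                 Cod (Zn C n) \<theta> = Cod (Zn C n) s' \<and>
                 Cmp (Zn C n) \<theta> s = s' \<and> Cmp (Zn C n) p' \<theta> = p"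
      using uniq_fact[OF s s' p p' sp sp' eq] n by simp
  qed
  show ?thesis using ex uq unfolding PF_def by blast
qed


end
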